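(* Let $\mathcal{H}$ be a finite-dimensional Hilbert space, $\{\rho_\theta;\theta\in\Theta\subset\mathbb{R}^d\}$ a smooth family of density operators, $\theta_0\in\Theta$ with $\rho=\rho_{\theta_0}$ strictly positive, and suppose the SLD tangent space at $\theta_0$ has a $\mathcal{D}_\rho$ invariant extension. Then for every $d\times d$ real positive matrix $G$ and every $\beta\in[0,1]$, $$C^{(H)}_{\theta_0,G}\ \ge\ C^{(\beta)}_{\theta_0,G}.$$
   Context: $\partial_i\rho=\frac{\partial}{\partial\theta^i}\rho_\theta|_{\theta=\theta_0}$. SLDs $L_i^{(S)}$: Hermitian with $\partial_i\rho=\frac12(\rho L_i^{(S)}+L_i^{(S)}\rho)$, assumed linearly independent; SLD tangent space $\mathcal{T}=\operatorname{span}_{\mathbb{R}}\{L_i^{(S)}\}$. Commutation operator: $\mathcal{D}_\rho(X)\rho+\rho\mathcal{D}_\rho(X)=\sqrt{-1}(X\rho-\rho X)$; a $\mathcal{D}_\rho$ invariant extension of $\mathcal{T}$ is a real subspace of Hermitian operators containing $\mathcal{T}$ and mapped into itself by $\mathcal{D}_\rho$. For $\beta\in[0,1]$, $L_i^{(\beta)}$ is defined by $\partial_i\rho=\frac{1+\beta}{2}\rho L_i^{(\beta)}+\frac{1-\beta}{2}L_i^{(\beta)}\rho$, $J^{(\beta)}_{\theta_0}=[\operatorname{Tr}\partial_i\rho\,L_j^{(\beta)}]_{ij}$, and $C^{(\beta)}_{\theta_0,G}=\operatorname{Tr}G(J^{(\beta)}_{\theta_0})^{-1}+\operatorname{Tr}|\sqrt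 G\,\operatorname{Im}(J^{(\beta)}_{\theta_0})^{-1}\sqrt G|$. Holevo bound: $C^{(H)}_{\theta_0,G}=\min_B\{\operatorname{Tr}GZ(B)+\operatorname{Tr}|\sqrt G\operatorname{Im}Z(B)\sqrt G|\}$ over Hermitian $B_1,\dots,B_d$ with $\operatorname{Tr}\partial_i\rho\,B_j=\delta_{ij}$, $Z_{ij}(B)=\operatorname{Tr}\rho B_jB_i$. Im entrywise; $|X|=(X^*X)^{1/2}$. *)

theory Defs
  imports "HOL-Analysis.Analysis"
begin

definition cadj :: "complex^'n^'n \<Rightarrow> complex^'n^'n" where
  "cadj A = (\<chi> i j. cnj (A $ j $ i))"

definition hermitian :: "complex^'n^'n \<Rightarrow> bool" where
  "hermitian A \<longleftrightarrow> cadj A = A"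

definition cinner :: "complex^'n \<Rightarrow> complex^'n \<Rightarrow> complex" where
  "cinner x y = (\<Sum>k\<in>UNIV. cnj (x $ k) * y $ k)"

definition cpsd :: "complex^'n^'n \<Rightarrow> bool" where
  "cpsd A \<longleftrightarrow> hermitian A \<and> (\<forall>x. 0 \<le> Re (cinner x (A *v x)))"

definition cpd :: "complex^'n^'n \<Rightarrow> bool" where
  "cpd A \<longleftrightarrow> hermitian A \<and> (\<forall>x. x \<noteq> 0 \<longrightarrow> 0 < Re (cinner x (A *v x)))"

definition density :: "complex^'n^'n \<Rightarrow> bool" where
  "density A \<longleftrightarrow> cpsd A \<and> trace A = 1"

definition csmul :: "complex \<Rightarrow> complex^'n^'n \<Rightarrow> complex^'n^'n" where
  "csmul c A = (\<chi> i j. c * A $ i $ j)"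

definition rpsd :: "real^'d^'d \<Rightarrow> bool" where
  "rpsd A \<longleftrightarrow> transpose A = A \<and> (\<forall>x. 0 \<le> x \<bullet> (A *v x))"

definition rpd :: "real^'d^'d \<Rightarrow> bool" where
  "rpd A \<longleftrightarrow> transpose A = A \<and> (\<forall>x. x \<noteq> 0 \<longrightarrow> 0 < x \<bullet> (A *v x))"

definition msqrt :: "real^'d^'d \<Rightarrow> real^'d^'d" where
  "msqrt A = (THE S. rpsd S \<and> S ** S = A)"

definition mabs :: "real^'d^'d \<Rightarrow> real^'d^'d" where
  "mabs X = msqrt (transpose X ** X)"

definition cmat :: "real^'d^'d \<Rightarrow> complex^'d^'d" where
  "cmat G = (\<chi> i j. complex_of_real (G $ i $ j))"

definition Im_mat :: "complex^'d^'d \<Rightarrow> real^'d^'d" where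
  "Im_mat A = (\<chi> i j. Im (A $ i $ j))"

definition pderiv_rho :: "(real^'d \<Rightarrow> complex^'n^'n) \<Rightarrow> 'd \<Rightarrow> complex^'n^'n" where
  "pderiv_rho Drho i = Drho (axis i 1)"

text \<open>beta-logarithmic derivative:
  d_i rho = (1+beta)/2 rho L + (1-beta)/2 L rho.  beta = 0 gives the SLD.\<close>
definition Lbeta :: "real \<Rightarrow> complex^'n^'n \<Rightarrow> complex^'n^'n \<Rightarrow> complex^'n^'n" where
  "Lbeta \<beta> rho D = (THE L. D = ((1 + \<beta>) / 2) *\<^sub>R (rho ** L) + ((1 - \<beta>) / 2) *\<^sub>R (L ** rho))"

definition SLD :: "complex^'n^'n \<Rightarrow> complex^'n^'n \<Rightarrow> complex^'n^'n" where
  "SLD rho D = (THE L. hermitian L \<and> D = (1/2) *\<^sub>R (rho ** L + L ** rho))"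

text \<open>Commutation operator: D(X) rho + rho D(X) = i (X rho - rho X).\<close>
definition commop :: "complex^'n^'n \<Rightarrow> complex^'n^'n \<Rightarrow> complex^'n^'n" where
  "commop rho X = (THE Y. Y ** rho + rho ** Y = csmul \<i> (X ** rho - rho ** X))"

definition SLD_tangent :: "complex^'n^'n \<Rightarrow> ('d \<Rightarrow> complex^'n^'n) \<Rightarrow> (complex^'n^'n) set" where
  "SLD_tangent rho dR = span (range (\<lambda>i. SLD rho (dR i)))"

definition has_invariant_extension :: "complex^'n^'n \<Rightarrow> ('d \<Rightarrow> complex^'n^'n) \<Rightarrow> bool" where
  "has_invariant_extension rho dR \<longleftrightarrow>
     (\<exists>V. subspace V \<and> (\<forall>X\<in>V. hermitian X) \<and> SLD_tangent rho dR \<subseteq> V \<and>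
          (\<forall>X\<in>V. commop rho X \<in> V))"

definition Jbeta :: "real \<Rightarrow> complex^'n^'n \<Rightarrow> ('d \<Rightarrow> complex^'n^'n) \<Rightarrow> complex^'d^'d" where
  "Jbeta \<beta> rho dR = (\<chi> i j. trace (dR i ** Lbeta \<beta> rho (dR j)))"

definition Cbeta :: "real \<Rightarrow> complex^'n^'n \<Rightarrow> ('d \<Rightarrow> complex^'n^'n) \<Rightarrow> real^'d^'d \<Rightarrow> real" where
  "Cbeta \<beta> rho dR G =
     (let Ji = matrix_inv (Jbeta \<beta> rho dR) in
      Re (trace (cmat G ** Ji)) + trace (mabs (msqrt G ** Im_mat Ji ** msqrt G)))"

definition Zmat :: "complex^'n^'n \<Rightarrow> ('d \<Rightarrow> complex^'n^'n) \<Rightarrow> complex^'d^'d" where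
  "Zmat rho B = (\<chi> i j. trace (rho ** B j ** B i))"

definition locally_unbiased :: "('d \<Rightarrow> complex^'n^'n) \<Rightarrow> ('d \<Rightarrow> complex^'n^'n) \<Rightarrow> bool" where
  "locally_unbiased dR B \<longleftrightarrow>
     (\<forall>j. hermitian (B j)) \<and> (\<forall>i j. trace (dR i ** B j) = (if i = j then 1 else 0))"

text \<open>Holevo bound (the minimum is attained; we write it as an infimum).\<close>
definition Holevo :: "complex^'n^'n \<Rightarrow> ('d \<Rightarrow> complex^'n^'n) \<Rightarrow> real^'d^'d \<Rightarrow> real" where
  "Holevo rho dR G = (INF B\<in>{B. locally_unbiased dR B}.
      Re (trace (cmat G ** Zmat rho B)) + trace (mabs (msqrt G ** Im_mat (Zmat rho B) ** msqrt G)))"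

end

theory Submission
  imports Defs
begin

lemma cinner_add_right: "cinner x (y + z) = cinner x y + cinner x z"
  by (simp add: cinner_def sum.distrib algebra_simps)
lemma cinner_add_left: "cinner (x + y) z = cinner x z + cinner y z"
  by (simp add: cinner_def sum.distrib algebra_simps)
lemma cinner_diff_right: "cinner x (y - z) = cinner x y - cinner x z"
  by (simp add: cinner_def sum_subtractf algebra_simps)
lemma cinner_diff_left: "cinner (x - y) z = cinner x z - cinner y z"
  by (simp add: cinner_def sum_subtractf algebra_simps)
lemma cinner_smul_right: "cinner x (c *s y) = c * cinner x y"
  by (simp add: cinner_def sum_distrib_left algebra_simps)
lemma cinner_smul_left: "cinner (c *s x) y = cnj c * cinner x y"
  by (simp add: cinner_def sum_distrib_left algebra_simps)
lemma scaleR_cvec_comp: "((r::real) *\<^sub>R (x::complex^'n)) $ k = of_real r * x $ k"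
  by (simp add: scaleR_conv_of_real[symmetric])
lemma cinner_scaleR_right: "cinner x (r *\<^sub>R y) = of_real r * cinner x y"
  unfolding cinner_def scaleR_cvec_comp by (simp add: sum_distrib_left algebra_simps)
lemma cinner_scaleR_left: "cinner (r *\<^sub>R x) y = of_real r * cinner x y"
  unfolding cinner_def scaleR_cvec_comp by (simp add: sum_distrib_left algebra_simps)
lemma cinner_zero_right[simp]: "cinner x 0 = 0"
  by (simp add: cinner_def)
lemma cinner_zero_left[simp]: "cinner 0 x = 0"
  by (simp add: cinner_def)
lemma cinner_sum_right: "cinner x (\<Sum>i\<in>A. f i) = (\<Sum>i\<in>A. cinner x (f i))"
  by (induct A rule: infinite_finite_induct) (auto simp: cinner_add_right)
lemma cinner_sum_left: "cinner (\<Sum>i\<in>A. f i) x = (\<Sum>i\<in>A. cinner (f i) x)"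
  by (induct A rule: infinite_finite_induct) (auto simp: cinner_add_left)
lemma cinner_commute: "cinner y x = cnj (cinner x y)"
  by (simp add: cinner_def mult.commute)
lemma Re_cinner: "Re (cinner x y) = x \<bullet> y"
  by (simp add: cinner_def inner_vec_def inner_complex_def Re_sum)
lemma cinner_self: "cinner x x = of_real ((norm x)^2)"
proof -
  have s: "(\<Sum>k\<in>UNIV. (cmod (x$k))^2) = (norm x)^2"
    by (simp add: norm_vec_def L2_set_def sum_nonneg)
  have "cinner x x = (\<Sum>k\<in>UNIV. of_real ((cmod (x$k))^2))"
    unfolding cinner_def by (intro sum.cong refl) (subst complex_norm_square, rule mult.commute)
  also have "\<dots> = of_real (\<Sum>k\<in>UNIV. (cmod (x$k))^2)" by (rule of_real_sum[symmetric])
  also have "\<dots> = of_real ((norm x)^2)" by (simp only: s)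
  finally show ?thesis .
qed
lemma cinner_self_eq_0: "cinner x x = 0 \<longleftrightarrow> x = 0"
  by (simp add: cinner_self)
lemma Re_cinner_self_ge0: "0 \<le> Re (cinner x x)"
  by (simp add: cinner_self)
lemma Im_cinner_self: "Im (cinner x x) = 0"
  by (simp add: cinner_self)

lemma cadj_cadj[simp]: "cadj (cadj A) = A"
  by (simp add: cadj_def vec_eq_iff)
lemma cinner_mat_left: "cinner (A *v x) y = cinner x (cadj A *v y)"
  unfolding cinner_def cadj_def matrix_vector_mult_def
  by (simp add: sum_distrib_left sum_distrib_right algebra_simps) (rule sum.swap)
lemma cinner_mat_right: "cinner x (A *v y) = cinner (cadj A *v x) y"
  using cinner_mat_left[of "cadj A" x y] by simp
lemma herm_cinner: "hermitian H \<Longrightarrow> cinner x (H *v y) = cinner (H *v x) y"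
  by (metis cinner_mat_right hermitian_def)
lemma herm_real: "hermitian H \<Longrightarrow> cinner x (H *v x) = of_real (Re (cinner x (H *v x)))"
proof -
  assume h: "hermitian H"
  have e: "cinner x (H *v x) = cnj (cinner x (H *v x))"
    using herm_cinner[OF h, of x x] cinner_commute[of "H *v x" x] by simp
  hence "Im (cinner x (H *v x)) = 0" by (metis cnj.sel(2) neg_equal_zero)
  thus ?thesis by (simp add: complex_eq_iff)
qed
lemma cadj_mult: "cadj (A ** B) = cadj B ** cadj A"
  by (simp add: cadj_def matrix_matrix_mult_def vec_eq_iff mult.commute)
lemma cadj_add: "cadj (A + B) = cadj A + cadj B"
  by (simp add: cadj_def vec_eq_iff)
lemma cadj_diff: "cadj (A - B) = cadj A - cadj B"
  by (simp add: cadj_def vec_eq_iff)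
lemma cadj_scaleR: "cadj (r *\<^sub>R A) = r *\<^sub>R cadj A"
  by (simp add: cadj_def vec_eq_iff)
lemma cadj_mat: "cadj (mat 1) = mat 1"
  by (simp add: cadj_def mat_def vec_eq_iff)
lemma trace_cadj: "trace (cadj A) = cnj (trace A)"
  by (simp add: trace_def cadj_def)

lemma smul_vec_eq: "(x::complex^'n) = y \<longleftrightarrow> (\<forall>z. cinner z x = cinner z y)"
  by (metis cinner_diff_right cinner_self_eq_0 eq_iff_diff_eq_0)


lemma quad0: assumes "\<forall>t::real. 2*t*c \<le> t^2*K" shows "c = 0"
proof -
  define t where "t = c / (\<bar>K\<bar> + 1)"
  have kp: "\<bar>K\<bar> + 1 \<noteq> 0" using abs_ge_zero[of K] by linarith
  have ct: "c = t * (\<bar>K\<bar> + 1)" unfolding t_def using kp by simp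
  have h: "2*t*c \<le> t^2*K" using assms by blast
  have "t^2 * K \<le> t^2 * \<bar>K\<bar>" by (simp add: mult_left_mono)
  with h have "2*t*c \<le> t*t*\<bar>K\<bar>" by (simp add: power2_eq_square)
  hence "2*(t*t)*(\<bar>K\<bar> + 1) \<le> (t*t)*\<bar>K\<bar>" unfolding ct by (simp add: algebra_simps)
  hence "(t*t)*(\<bar>K\<bar> + 2) \<le> 0" by (simp add: algebra_simps)
  moreover have "0 < \<bar>K\<bar> + 2" by (simp add: add_nonneg_pos)
  ultimately have "t*t \<le> 0" by (simp add: mult_le_0_iff)
  moreover have "0 \<le> t*t" by simp
  ultimately have "t*t = 0" by simp
  thus ?thesis using ct by simp
qed

lemma mv_scaleR: "(H::complex^'n^'m) *v (r *\<^sub>R x) = r *\<^sub>R (H *v x)"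
  by (simp add: vec_eq_iff matrix_vector_mult_def scaleR_cvec_comp sum_distrib_left algebra_simps scaleR_sum_right)
lemma mv_smul: "(H::complex^'n^'m) *v (c *s x) = c *s (H *v x)"
  by (simp add: vec_eq_iff matrix_vector_mult_def sum_distrib_left algebra_simps)
lemma linear_mv: "linear (\<lambda>x. (H::complex^'n^'m) *v x)"
  by (rule linearI) (simp_all add: matrix_vector_right_distrib mv_scaleR)
lemma cont_mv: "continuous_on S (\<lambda>x. (H::complex^'n^'m) *v x)"
  by (rule linear_continuous_on) (simp add: linear_mv flip: linear_conv_bounded_linear)

definition onset :: "(complex^'n) set \<Rightarrow> bool" where
  "onset B \<longleftrightarrow> (\<forall>b\<in>B. cinner b b = 1) \<and> (\<forall>b\<in>B. \<forall>c\<in>B. b \<noteq> c \<longrightarrow> cinner b c = 0)"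

lemma ofreal_smul: "(of_real r::complex) *s (x::complex^'n) = r *\<^sub>R x"
  unfolding vec_eq_iff vector_scaleR_component vector_smult_component by (simp add: scaleR_conv_of_real)

lemma subspace_smul: "subspace U \<Longrightarrow> x \<in> U \<Longrightarrow> r *\<^sub>R x \<in> U"
  by (simp add: subspace_scale)

lemma cinner_zero_sym: "cinner x y = 0 \<Longrightarrow> cinner y x = 0"
  by (subst cinner_commute) simp

lemma csubspace_smul:
  assumes "subspace U" "\<forall>x\<in>U. \<i> *s x \<in> U" "x \<in> U"
  shows "c *s x \<in> U"
proof -
  have cc: "c = of_real (Re c) + of_real (Im c) * \<i>" by (simp add: complex_eq_iff)
  have "c *s x = Re c *\<^sub>R x + Im c *\<^sub>R (\<i> *s x)"
    unfolding vec_eq_iff vector_scaleR_component vector_smult_component vector_add_component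
    by (subst cc) (simp add: scaleR_conv_of_real algebra_simps)
  thus ?thesis using assms by (simp add: subspace_add subspace_smul)
qed

lemma spectral_sub:
  assumes herm: "hermitian (H::complex^'n^'n)"
  shows "subspace U \<Longrightarrow> (\<forall>x\<in>U. \<i> *s x \<in> U) \<Longrightarrow> (\<forall>x\<in>U. H *v x \<in> U) \<Longrightarrow>
    \<exists>B ev. finite B \<and> B \<subseteq> U \<and> onset B \<and> (\<forall>b\<in>B. H *v b = of_real (ev b) *s b) \<and>
       (\<forall>x\<in>U. x = (\<Sum>b\<in>B. cinner b x *s b))"
proof (induction "dim U" arbitrary: U rule: less_induct)
  case less
  note sU = less.prems(1) and iU = less.prems(2) and HU = less.prems(3)
  show ?case
  proof (cases "U \<subseteq> {0}")
    case True
    show ?thesis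
      by (rule exI[of _ "{}"], rule exI[of _ "\<lambda>_. 0"]) (use True in \<open>auto simp: onset_def\<close>)
  next
    case False
    then obtain z where z: "z \<in> U" "z \<noteq> 0" by blast
    define S where "S = U \<inter> sphere 0 1"
    define f where "f = (\<lambda>x. Re (cinner x (H *v x)))"
    have fi: "f = (\<lambda>x. x \<bullet> (H *v x))" unfolding f_def by (simp add: Re_cinner)
    have cS: "compact S" unfolding S_def
      by (intro closed_Int_compact closed_subspace sU compact_sphere)
    have "(1/norm z) *\<^sub>R z \<in> S" unfolding S_def using z sU by (simp add: subspace_smul)
    hence Sne: "S \<noteq> {}" by blast
    have cf: "continuous_on S f" unfolding fi
      by (intro continuous_on_inner continuous_on_id cont_mv)
    obtain x0 where x0S: "x0 \<in> S" and x0max: "\<forall>y\<in>S. f y \<le> f x0"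
      using continuous_attains_sup[OF cS Sne cf] by blast
    have x0U: "x0 \<in> U" and nx0: "norm x0 = 1" using x0S unfolding S_def by auto
    have cx0: "cinner x0 x0 = 1" using nx0 by (simp add: cinner_self)
    define lam where "lam = f x0"
    have fscale: "f (r *\<^sub>R v) = r^2 * f v" for r v
      unfolding f_def by (simp add: mv_scaleR cinner_scaleR_left cinner_scaleR_right power2_eq_square)
    have maxp: "f v \<le> lam * (norm v)^2" if vU: "v \<in> U" for v
    proof (cases "v = 0")
      case True thus ?thesis by (simp add: f_def)
    next
      case False
      have "(1/norm v) *\<^sub>R v \<in> S" unfolding S_def using vU sU False by (simp add: subspace_smul)
      hence "f ((1/norm v) *\<^sub>R v) \<le> lam" using x0max lam_def by blast
      hence "f v / (norm v)^2 \<le> lam" by (simp add: fscale power2_eq_square)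
      thus ?thesis using False by (simp add: divide_le_eq mult.commute)
    qed
    have Hx0U: "H *v x0 \<in> U" using HU x0U by blast
    have orth0: "cinner y (H *v x0) = 0" if yU: "y \<in> U" and yo: "cinner x0 y = 0" for y
    proof -
      have key: "Re (cinner w (H *v x0)) = 0" if wU: "w \<in> U" and wo: "cinner x0 w = 0" for w
      proof -
        define c where "c = Re (cinner w (H *v x0))"
        have "\<forall>t::real. 2*t*c \<le> t^2*(lam * (norm w)^2 - f w)"
        proof
          fix t :: real
          define v where "v = x0 + t *\<^sub>R w"
          have vU: "v \<in> U" unfolding v_def using sU x0U wU
            by (simp add: subspace_add subspace_smul)
          have e1: "cinner x0 (H *v w) = cnj (cinner w (H *v x0))"
            using herm_cinner[OF herm, of x0 w] cinner_commute[of "H *v x0" w] by simp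
          have "f v = f x0 + t * Re (cinner x0 (H *v w)) + t * c + t^2 * f w"
            unfolding f_def v_def c_def
            by (simp add: matrix_vector_right_distrib mv_scaleR cinner_add_left cinner_add_right
                cinner_scaleR_left cinner_scaleR_right power2_eq_square algebra_simps)
          also have "Re (cinner x0 (H *v w)) = c" unfolding e1 c_def by simp
          finally have fv: "f v = lam + 2*t*c + t^2 * f w" unfolding lam_def by simp
          have wo': "cinner w x0 = 0" using wo by (rule cinner_zero_sym)
          have cww: "cinner w w = of_real ((norm w)^2)" by (rule cinner_self)
          have "(norm v)^2 = Re (cinner v v)" by (simp add: cinner_self)
          also have "\<dots> = 1 + t^2 * (norm w)^2" unfolding v_def
            by (simp add: cinner_add_left cinner_add_right cinner_scaleR_left cinner_scaleR_right
                cx0 wo wo' cww power2_eq_square)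
          finally have nv: "(norm v)^2 = 1 + t^2 * (norm w)^2" .
          from maxp[OF vU] show "2*t*c \<le> t^2*(lam * (norm w)^2 - f w)"
            unfolding fv nv by (simp add: algebra_simps)
        qed
        thus ?thesis using quad0 c_def by blast
      qed
      have r1: "Re (cinner y (H *v x0)) = 0" by (rule key[OF yU yo])
      have "Re (cinner (\<i> *s y) (H *v x0)) = 0"
        by (rule key) (use iU yU yo in \<open>auto simp: cinner_smul_right\<close>)
      hence r2: "Im (cinner y (H *v x0)) = 0" by (simp add: cinner_smul_left)
      show ?thesis using r1 r2 complex_eqI by simp
    qed
    have lamr: "cinner x0 (H *v x0) = of_real lam"
      unfolding lam_def f_def using herm herm_real by blast
    define w where "w = H *v x0 - of_real lam *s x0"
    have wU: "w \<in> U" unfolding w_def ofreal_smul using Hx0U x0U sU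
      by (intro subspace_diff subspace_smul) auto
    have wo: "cinner x0 w = 0" unfolding w_def
      by (simp add: cinner_diff_right cinner_smul_right lamr cx0)
    have "cinner w (H *v x0) = 0" using orth0[OF wU wo] .
    moreover have "cinner w x0 = 0" using wo by (rule cinner_zero_sym)
    ultimately have "cinner w w = 0" unfolding w_def
      by (simp add: cinner_diff_right cinner_smul_right)
    hence "w = 0" by (simp add: cinner_self_eq_0)
    hence eig: "H *v x0 = of_real lam *s x0" unfolding w_def by simp
    define U' where "U' = {y\<in>U. cinner x0 y = 0}"
    have sU': "subspace U'" unfolding U'_def subspace_def using sU
      by (auto simp: subspace_def cinner_add_right cinner_scaleR_right)
    have iU': "\<forall>x\<in>U'. \<i> *s x \<in> U'" unfolding U'_def using iU by (auto simp: cinner_smul_right)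
    have HU': "\<forall>x\<in>U'. H *v x \<in> U'" unfolding U'_def using HU
      by (auto simp: herm_cinner[OF herm] eig cinner_smul_left)
    have "U' \<subseteq> U" unfolding U'_def by auto
    moreover have "x0 \<notin> U'" unfolding U'_def using cx0 by auto
    ultimately have "span U' \<subset> span U" using x0U sU sU'
      using span_eq_iff[of U'] span_eq_iff[of U] by blast
    hence "dim U' < dim U" by (rule dim_psubset)
    then obtain B ev where B: "finite B" "B \<subseteq> U'" "onset B" "\<forall>b\<in>B. H *v b = of_real (ev b) *s b"
       "\<forall>x\<in>U'. x = (\<Sum>b\<in>B. cinner b x *s b)"
      using less.hyps[OF _ sU' iU' HU'] by blast
    have x0B: "x0 \<notin> B" using B(2) \<open>x0 \<notin> U'\<close> by blast
    define B0 where "B0 = insert x0 B"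
    define ev0 where "ev0 = ev(x0 := lam)"
    show ?thesis
    proof (intro exI conjI)
      show "finite B0" unfolding B0_def using B by simp
      show "B0 \<subseteq> U" unfolding B0_def using B(2) \<open>U' \<subseteq> U\<close> x0U by blast
      have ob: "cinner x0 b = 0" if "b \<in> B" for b using B(2) that U'_def by blast
      show "onset B0" using B(3) ob cx0 unfolding onset_def B0_def
        by (auto intro: cinner_zero_sym)
      show "\<forall>b\<in>B0. H *v b = of_real (ev0 b) *s b" unfolding B0_def ev0_def using B(4) eig x0B by auto
      show "\<forall>x\<in>U. x = (\<Sum>b\<in>B0. cinner b x *s b)"
      proof
        fix x assume xU: "x \<in> U"
        define y where "y = x - cinner x0 x *s x0"
        have yU': "y \<in> U'" unfolding U'_def y_def using xU x0U sU iU
          by (auto simp: cinner_diff_right cinner_smul_right cx0 intro!: subspace_diff csubspace_smul)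
        have cby: "cinner b y = cinner b x" if "b \<in> B" for b
          using ob[OF that] unfolding y_def
          by (simp add: cinner_diff_right cinner_smul_right cinner_zero_sym)
        have "x = cinner x0 x *s x0 + y" unfolding y_def by simp
        also have "y = (\<Sum>b\<in>B. cinner b y *s b)" using B(5) yU' by blast
        also have "\<dots> = (\<Sum>b\<in>B. cinner b x *s b)" using cby by simp
        finally show "x = (\<Sum>b\<in>B0. cinner b x *s b)" unfolding B0_def using B(1) x0B by simp
      qed
    qed
  qed
qed


definition eigsys :: "complex^'n^'n \<Rightarrow> (complex^'n) set \<Rightarrow> (complex^'n \<Rightarrow> real) \<Rightarrow> bool" where
  "eigsys H B ev \<longleftrightarrow> finite B \<and> onset B \<and> (\<forall>b\<in>B. H *v b = of_real (ev b) *s b) \<and>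
     (\<forall>x. x = (\<Sum>b\<in>B. cinner b x *s b))"

theorem spectral: "hermitian H \<Longrightarrow> \<exists>B ev. eigsys H B ev"
  using spectral_sub[of H UNIV] unfolding eigsys_def by (auto simp: subspace_UNIV)

lemma onset_coord:
  assumes "finite B" "onset B" "b \<in> B"
  shows "cinner b (\<Sum>c\<in>B. f c *s c) = f b"
proof -
  have "cinner b (\<Sum>c\<in>B. f c *s c) = (\<Sum>c\<in>B. f c * cinner b c)"
    by (simp add: cinner_sum_right cinner_smul_right)
  also have "\<dots> = f b * cinner b b + (\<Sum>c\<in>B-{b}. f c * cinner b c)"
    using assms by (simp add: sum.remove)
  also have "(\<Sum>c\<in>B-{b}. f c * cinner b c) = 0"
    using assms unfolding onset_def by (intro sum.neutral) auto
  finally show ?thesis using assms unfolding onset_def by simp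
qed

lemma mv_sum: "(H::complex^'n^'m) *v (\<Sum>b\<in>B. f b) = (\<Sum>b\<in>B. H *v f b)"
  by (induct B rule: infinite_finite_induct) (auto simp: matrix_vector_right_distrib)

lemma sum_mv: "(\<Sum>b\<in>B. f b :: complex^'n^'m) *v x = (\<Sum>b\<in>B. f b *v x)"
  by (induct B rule: infinite_finite_induct) (auto simp: matrix_vector_mult_add_rdistrib)

lemma scaleR_mv: "(r *\<^sub>R (A::complex^'n^'m)) *v x = r *\<^sub>R (A *v x)"
  by (simp add: vec_eq_iff matrix_vector_mult_def scaleR_sum_right)

lemma eigsys_apply:
  assumes "eigsys H B ev"
  shows "H *v x = (\<Sum>b\<in>B. (of_real (ev b) * cinner b x) *s b)"
proof -
  have "H *v x = H *v (\<Sum>b\<in>B. cinner b x *s b)" using assms unfolding eigsys_def by metis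
  also have "\<dots> = (\<Sum>b\<in>B. cinner b x *s (H *v b))"
    by (simp add: mv_sum mv_smul)
  also have "\<dots> = (\<Sum>b\<in>B. (of_real (ev b) * cinner b x) *s b)"
    using assms unfolding eigsys_def by (intro sum.cong) (auto simp: mult.commute)
  finally show ?thesis .
qed

definition outer :: "complex^'n \<Rightarrow> complex^'n^'n" where
  "outer b = (\<chi> i j. b$i * cnj (b$j))"

definition fmat :: "(complex^'n) set \<Rightarrow> (complex^'n \<Rightarrow> real) \<Rightarrow> complex^'n^'n" where
  "fmat B g = (\<Sum>b\<in>B. g b *\<^sub>R outer b)"

lemma outer_mv: "outer b *v x = cinner b x *s b"
  by (simp add: outer_def cinner_def vec_eq_iff matrix_vector_mult_def sum_distrib_left algebra_simps)

lemma scaleR_smul: "r *\<^sub>R (c *s (x::complex^'n)) = (of_real r * c) *s x"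
  unfolding vec_eq_iff vector_scaleR_component vector_smult_component by (simp add: scaleR_conv_of_real)

lemma fmat_mv: "fmat B g *v x = (\<Sum>b\<in>B. (of_real (g b) * cinner b x) *s b)"
  unfolding fmat_def sum_mv scaleR_mv outer_mv
  by (intro sum.cong refl) (simp add: scaleR_smul)

lemma cadj_outer: "cadj (outer b) = outer b"
  by (simp add: outer_def cadj_def vec_eq_iff)

lemma cadj_zero: "cadj 0 = 0"
  by (simp add: cadj_def vec_eq_iff)

lemma cadj_sum: "cadj (\<Sum>b\<in>B. f b) = (\<Sum>b\<in>B. cadj (f b))"
  by (induct B rule: infinite_finite_induct) (auto simp: cadj_add cadj_zero)

lemma herm_fmat: "hermitian (fmat B g)"
  unfolding hermitian_def fmat_def cadj_sum cadj_scaleR cadj_outer ..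

lemma cinner_fmat: "cinner x (fmat B g *v x) = (\<Sum>b\<in>B. of_real (g b * (cmod (cinner b x))^2))"
  unfolding fmat_mv cinner_sum_right cinner_smul_right
proof (intro sum.cong refl)
  fix b
  have "cinner x b * cinner b x = of_real ((cmod (cinner b x))^2)"
  proof -
    have "cinner x b = cnj (cinner b x)" by (rule cinner_commute)
    thus ?thesis by (simp only: complex_norm_square mult.commute)
  qed
  thus "complex_of_real (g b) * cinner b x * cinner x b = complex_of_real (g b * (cmod (cinner b x))\<^sup>2)"
    by (simp add: mult.commute mult.left_commute)
qed

lemma cpsd_fmat: "(\<forall>b\<in>B. 0 \<le> g b) \<Longrightarrow> cpsd (fmat B g)"
  unfolding cpsd_def using herm_fmat by (auto simp: cinner_fmat Re_sum intro!: sum_nonneg)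

lemma eigsys_fmat: "eigsys H B ev \<Longrightarrow> H = fmat B ev"
  by (simp add: matrix_eq eigsys_apply fmat_mv)

lemma fmat_mult:
  assumes "finite B" "onset B"
  shows "fmat B g ** fmat B h = fmat B (\<lambda>b. g b * h b)"
proof (subst matrix_eq, intro allI)
  fix x
  have "(fmat B g ** fmat B h) *v x = fmat B g *v (fmat B h *v x)"
    by (simp add: matrix_vector_mul_assoc)
  also have "\<dots> = (\<Sum>b\<in>B. (of_real (g b) * (of_real (h b) * cinner b x)) *s b)"
    unfolding fmat_mv[of B g] by (intro sum.cong refl) (simp add: onset_coord[OF assms] fmat_mv)
  also have "\<dots> = fmat B (\<lambda>b. g b * h b) *v x"
    unfolding fmat_mv by (simp add: mult.assoc)
  finally show "(fmat B g ** fmat B h) *v x = fmat B (\<lambda>b. g b * h b) *v x" .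
qed

lemma eigsys_id: "eigsys H B ev \<Longrightarrow> fmat B (\<lambda>_. 1) = mat 1"
  unfolding eigsys_def by (simp add: matrix_eq fmat_mv)

lemma trace_outer_right: "trace (M ** outer b) = cinner b (M *v b)"
  unfolding trace_def matrix_matrix_mult_def outer_def cinner_def matrix_vector_mult_def
  by (simp add: sum_distrib_left algebra_simps)

lemma trace_zero: "trace (0::'a::semiring_1^'n^'n) = 0"
  by (simp add: trace_def)

lemma trace_sum: "trace (\<Sum>b\<in>B. f b :: 'a::comm_semiring_1^'n^'n) = (\<Sum>b\<in>B. trace (f b))"
  by (induct B rule: infinite_finite_induct) (simp_all add: trace_add trace_zero)

lemma matrix_sum_right_distrib: "(M::'a::semiring_1^'n^'m) ** (\<Sum>b\<in>B. f b) = (\<Sum>b\<in>B. M ** f b)"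
  by (induct B rule: infinite_finite_induct) (simp_all add: matrix_add_ldistrib)

lemma eigsys_trace:
  assumes "eigsys H B ev"
  shows "trace M = (\<Sum>b\<in>B. cinner b (M *v b))"
proof -
  have "trace M = trace (M ** fmat B (\<lambda>_. 1))" using eigsys_id[OF assms] by simp
  also have "M ** fmat B (\<lambda>_. 1) = (\<Sum>b\<in>B. M ** outer b)"
    unfolding fmat_def by (simp add: matrix_sum_right_distrib)
  finally show ?thesis by (simp add: trace_sum trace_outer_right)
qed


lemma eigsys_resol: "eigsys H B ev \<Longrightarrow> x = (\<Sum>b\<in>B. cinner b x *s b)"
  unfolding eigsys_def by blast

lemma eigsys_cinner_eig: "eigsys H B ev \<Longrightarrow> b \<in> B \<Longrightarrow> cinner b (H *v b) = of_real (ev b)"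
  unfolding eigsys_def onset_def by (simp add: cinner_smul_right)

lemma eig_nonneg: "cpsd P \<Longrightarrow> eigsys P B ev \<Longrightarrow> b \<in> B \<Longrightarrow> 0 \<le> ev b"
  using eigsys_cinner_eig[of P B ev b] unfolding cpsd_def by (metis Re_complex_of_real)

lemma mv_apply_resol:
  assumes "eigsys H B ev"
  shows "M *v x = (\<Sum>b\<in>B. cinner b x *s (M *v b))"
proof -
  have "M *v x = M *v (\<Sum>b\<in>B. cinner b x *s b)" using eigsys_resol[OF assms] by metis
  thus ?thesis by (simp add: mv_sum mv_smul)
qed

lemma psd_sqrt_unique:
  assumes p1: "cpsd P1" and p2: "cpsd P2" and sq: "P1 ** P1 = P2 ** P2"
  shows "P1 = P2"
proof -
  obtain B p where eB: "eigsys P1 B p" using spectral p1 unfolding cpsd_def by blast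
  obtain C q where eC: "eigsys P2 C q" using spectral p2 unfolding cpsd_def by blast
  have fC: "finite C" "onset C" using eC unfolding eigsys_def by auto
  have P2f: "P2 = fmat C q" by (rule eigsys_fmat[OF eC])
  have key: "P2 *v b = of_real (p b) *s b" if bB: "b \<in> B" for b
  proof -
    have pb: "0 \<le> p b" using eig_nonneg[OF p1 eB bB] .
    have P1b: "P1 *v b = of_real (p b) *s b" using eB bB unfolding eigsys_def by blast
    have Sb: "(P2 ** P2) *v b = of_real (p b * p b) *s b"
      unfolding sq[symmetric] matrix_vector_mul_assoc[symmetric] P1b mv_smul
      by (simp add: P1b)
    have c0: "cinner c b = 0 \<or> q c = p b" if cC: "c \<in> C" for c
    proof -
      have qc: "0 \<le> q c" using eig_nonneg[OF p2 eC cC] .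
      have e1: "cinner c ((P2 ** P2) *v b) = of_real (q c * q c) * cinner c b"
        unfolding P2f fmat_mult[OF fC] fmat_mv onset_coord[OF fC cC] ..
      have e2: "cinner c ((P2 ** P2) *v b) = of_real (p b * p b) * cinner c b"
        unfolding Sb cinner_smul_right ..
      have "of_real (q c * q c) * cinner c b = (of_real (p b * p b) :: complex) * cinner c b"
        using e1 e2 by (rule trans[OF sym])
      hence "cinner c b = 0 \<or> (of_real (q c * q c)::complex) = of_real (p b * p b)"
        by (simp only: mult_cancel_right)
      hence "cinner c b = 0 \<or> q c * q c = p b * p b" by (simp only: of_real_eq_iff)
      moreover have "q c = p b" if h: "q c * q c = p b * p b"
      proof -
        have "\<bar>q c\<bar> = sqrt (q c * q c)" by (rule real_sqrt_abs2[symmetric])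
        also have "\<dots> = sqrt (p b * p b)" by (simp only: h)
        also have "\<dots> = \<bar>p b\<bar>" by (rule real_sqrt_abs2)
        finally have "\<bar>q c\<bar> = \<bar>p b\<bar>" .
        thus "q c = p b" using qc pb by simp
      qed
      ultimately show ?thesis by blast
    qed
    have "P2 *v b = (\<Sum>c\<in>C. (of_real (q c) * cinner c b) *s c)"
      unfolding P2f fmat_mv ..
    also have "\<dots> = (\<Sum>c\<in>C. (of_real (p b) * cinner c b) *s c)"
      by (intro sum.cong refl) (use c0 in auto)
    also have "\<dots> = of_real (p b) *s (\<Sum>c\<in>C. cinner c b *s c)"
      by (simp add: sum_cmul[symmetric] vector_smult_assoc)
    also have "(\<Sum>c\<in>C. cinner c b *s c) = b" using eigsys_resol[OF eC] by metis
    finally show ?thesis .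
  qed
  show ?thesis
  proof (subst matrix_eq, intro allI)
    fix x
    show "P1 *v x = P2 *v x"
      unfolding mv_apply_resol[OF eB, of P1 x] mv_apply_resol[OF eB, of P2 x]
      using key eB unfolding eigsys_def by (intro sum.cong refl) auto
  qed
qed


definition Re_mat :: "complex^'d^'d \<Rightarrow> real^'d^'d" where
  "Re_mat A = (\<chi> i j. Re (A $ i $ j))"
definition cconj :: "complex^'n^'n \<Rightarrow> complex^'n^'n" where
  "cconj A = (\<chi> i j. cnj (A $ i $ j))"
definition vconj :: "complex^'n \<Rightarrow> complex^'n" where
  "vconj x = (\<chi> i. cnj (x $ i))"
definition cvec :: "real^'n \<Rightarrow> complex^'n" where
  "cvec x = (\<chi> i. of_real (x $ i))"

lemma cmat_mult: "cmat (A ** B) = cmat A ** cmat B"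
  by (simp add: cmat_def matrix_matrix_mult_def vec_eq_iff)
lemma cmat_transpose: "cadj (cmat A) = cmat (transpose A)"
  by (simp add: cmat_def cadj_def transpose_def vec_eq_iff)
lemma cmat_inj: "cmat A = cmat B \<Longrightarrow> A = B"
  by (simp add: cmat_def vec_eq_iff)
lemma cmat_add: "cmat (A + B) = cmat A + cmat B"
  by (simp add: cmat_def vec_eq_iff)
lemma cmat_diff: "cmat (A - B) = cmat A - cmat B"
  by (simp add: cmat_def vec_eq_iff)
lemma cmat_uminus: "cmat (- A) = - cmat A"
  by (simp add: cmat_def vec_eq_iff)
lemma cmat_scaleR: "cmat (r *\<^sub>R A) = r *\<^sub>R cmat A"
  by (simp add: cmat_def vec_eq_iff of_real_def)
lemma trace_cmat: "trace (cmat A) = of_real (trace A)"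
  by (simp add: cmat_def trace_def)
lemma cconj_mult: "cconj (A ** B) = cconj A ** cconj B"
  by (simp add: cconj_def matrix_matrix_mult_def vec_eq_iff)
lemma cconj_cmat: "cconj (cmat A) = cmat A"
  by (simp add: cconj_def cmat_def vec_eq_iff)
lemma cconj_cconj: "cconj (cconj A) = A"
  by (simp add: cconj_def vec_eq_iff)
lemma cadj_cconj: "cadj (cconj A) = cconj (cadj A)"
  by (simp add: cconj_def cadj_def vec_eq_iff)
lemma cconj_mv: "cconj M *v x = vconj (M *v vconj x)"
  by (simp add: cconj_def vconj_def matrix_vector_mult_def vec_eq_iff)
lemma cinner_vconj: "cinner (vconj x) (vconj y) = cnj (cinner x y)"
  by (simp add: cinner_def vconj_def)
lemma vconj_vconj: "vconj (vconj x) = x"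
  by (simp add: vconj_def vec_eq_iff)
lemma cinner_cconj: "cinner x (cconj M *v x) = cnj (cinner (vconj x) (M *v vconj x))"
  by (metis cconj_mv cinner_vconj vconj_vconj)
lemma cpsd_cconj: "cpsd M \<Longrightarrow> cpsd (cconj M)"
  unfolding cpsd_def hermitian_def by (simp add: cadj_cconj cinner_cconj)
lemma cconj_real: "cconj M = M \<Longrightarrow> M = cmat (Re_mat M)"
  unfolding cconj_def cmat_def Re_mat_def vec_eq_iff
  by (simp add: complex_eq_iff)

lemma Re_cinner_cmat:
  "Re (cinner x (cmat S *v x)) =
     (\<chi> k. Re (x$k)) \<bullet> (S *v (\<chi> k. Re (x$k))) + (\<chi> k. Im (x$k)) \<bullet> (S *v (\<chi> k. Im (x$k)))"
  by (simp add: cinner_def cmat_def matrix_vector_mult_def inner_vec_def Re_sum sum_distrib_left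
      algebra_simps sum.distrib[symmetric])

lemma rpsd_cpsd: "rpsd S \<Longrightarrow> cpsd (cmat S)"
  unfolding rpsd_def cpsd_def hermitian_def by (simp add: cmat_transpose Re_cinner_cmat add_nonneg_nonneg)

lemma cvec_parts: "(\<chi> k. Re (cvec x $ k)) = x" "(\<chi> k. Im (cvec x $ k)) = 0"
  by (simp_all add: cvec_def vec_eq_iff)

lemma cpsd_rpsd: "cpsd (cmat T) \<Longrightarrow> rpsd T"
  unfolding rpsd_def cpsd_def hermitian_def
proof (intro conjI allI)
  assume h: "cadj (cmat T) = cmat T \<and> (\<forall>x. 0 \<le> Re (cinner x (cmat T *v x)))"
  show "transpose T = T" using h by (simp add: cmat_transpose cmat_inj)
  fix x
  show "0 \<le> x \<bullet> (T *v x)" using h[THEN conjunct2, rule_format, of "cvec x"]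
    by (simp add: Re_cinner_cmat cvec_parts)
qed

lemma rsqrt_unique: "rpsd T1 \<Longrightarrow> rpsd T2 \<Longrightarrow> T1 ** T1 = T2 ** T2 \<Longrightarrow> T1 = T2"
  by (metis cmat_inj cmat_mult psd_sqrt_unique rpsd_cpsd)

lemma rsqrt_exists:
  assumes S: "rpsd S"
  shows "\<exists>T. rpsd T \<and> T ** T = S"
proof -
  have H: "cpsd (cmat S)" using rpsd_cpsd[OF S] .
  obtain B ev where eB: "eigsys (cmat S) B ev" using spectral H unfolding cpsd_def by blast
  have fB: "finite B" "onset B" using eB unfolding eigsys_def by auto
  define N where "N = fmat B (\<lambda>b. sqrt (ev b))"
  have Np: "cpsd N" unfolding N_def using eig_nonneg[OF H eB] by (intro cpsd_fmat) simp
  have NN: "N ** N = cmat S"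
  proof -
    have "N ** N = fmat B (\<lambda>b. sqrt (ev b) * sqrt (ev b))" unfolding N_def by (rule fmat_mult[OF fB])
    also have "\<dots> = fmat B ev"
      unfolding fmat_def using eig_nonneg[OF H eB] by (intro sum.cong refl) (simp add: real_sqrt_mult_self)
    finally show ?thesis using eigsys_fmat[OF eB] by simp
  qed
  have "cconj N ** cconj N = cmat S" by (simp add: cconj_mult[symmetric] NN cconj_cmat)
  hence "cconj N = N" using psd_sqrt_unique[OF cpsd_cconj[OF Np] Np] NN by simp
  hence Nr: "N = cmat (Re_mat N)" by (rule cconj_real)
  show ?thesis
  proof (intro exI conjI)
    show "rpsd (Re_mat N)" using Np Nr by (metis cpsd_rpsd)
    show "Re_mat N ** Re_mat N = S" using NN Nr by (metis cmat_inj cmat_mult)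
  qed
qed

lemma msqrt:
  assumes "rpsd S" shows "rpsd (msqrt S)" "msqrt S ** msqrt S = S"
proof -
  have "\<exists>!T. rpsd T \<and> T ** T = S" using rsqrt_exists[OF assms] rsqrt_unique by blast
  hence "rpsd (msqrt S) \<and> msqrt S ** msqrt S = S" unfolding msqrt_def by (rule theI')
  thus "rpsd (msqrt S)" "msqrt S ** msqrt S = S" by auto
qed

lemma msqrt_eq: "rpsd S \<Longrightarrow> rpsd T \<Longrightarrow> T ** T = S \<Longrightarrow> msqrt S = T"
  using msqrt rsqrt_unique by metis

lemma rpsd_gram: "rpsd (transpose X ** (X::real^'d^'d))"
  unfolding rpsd_def
proof (intro conjI allI)
  show "transpose (transpose X ** X) = transpose X ** X" by (simp add: matrix_transpose_mul)
  fix x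
  have "x \<bullet> ((transpose X ** X) *v x) = ((X *v x) v* X) \<bullet> x"
    by (simp add: matrix_vector_mul_assoc[symmetric] transpose_matrix_vector inner_commute)
  also have "\<dots> = (X *v x) \<bullet> (X *v x)" by (rule dot_lmul_matrix)
  finally show "0 \<le> x \<bullet> ((transpose X ** X) *v x)" by simp
qed


lemma csmul_mult: "csmul a X ** csmul b Y = csmul (a*b) (X ** Y)"
  by (simp add: csmul_def matrix_matrix_mult_def vec_eq_iff sum_distrib_left algebra_simps)
lemma cadj_csmul: "cadj (csmul a X) = csmul (cnj a) (cadj X)"
  by (simp add: csmul_def cadj_def vec_eq_iff)
lemma csmul_cmat_neg: "csmul (-1) (cmat X) = cmat (- X)"
  by (simp add: csmul_def cmat_def vec_eq_iff)
lemma cconj_csmul: "cconj (csmul a X) = csmul (cnj a) (cconj X)"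
  by (simp add: csmul_def cconj_def vec_eq_iff)
lemma cconj_add: "cconj (X + Y) = cconj X + cconj Y"
  by (simp add: cconj_def vec_eq_iff)
lemma csmul_mv: "csmul a X *v x = a *s (X *v x)"
  by (simp add: csmul_def matrix_vector_mult_def vec_eq_iff sum_distrib_left algebra_simps)

lemma herm_iA: "transpose A = - A \<Longrightarrow> hermitian (csmul \<i> (cmat A))"
  unfolding hermitian_def cadj_csmul cmat_transpose by (simp add: cmat_def csmul_def vec_eq_iff)

lemma matrix_neg_mult: "(- A) ** (B::'a::ring_1^'n^'n) = - (A ** B)"
  by (simp add: matrix_matrix_mult_def vec_eq_iff sum_negf)

lemma onset_fin: "eigsys H B ev \<Longrightarrow> finite B \<and> onset B"
  unfolding eigsys_def by auto

lemma fmat_cinner_basis: "eigsys H B ev \<Longrightarrow> b \<in> B \<Longrightarrow> cinner b (fmat B g *v b) = of_real (g b)"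
proof -
  assume e: "eigsys H B ev" and b: "b \<in> B"
  have "cinner b (fmat B g *v b) = of_real (g b) * cinner b b"
    unfolding fmat_mv using onset_fin[OF e] b by (simp add: onset_coord)
  thus ?thesis using onset_fin[OF e] b unfolding onset_def by simp
qed

lemma trace_fmat: "eigsys H B ev \<Longrightarrow> trace (fmat B g) = of_real (\<Sum>b\<in>B. g b)"
  by (simp add: eigsys_trace[of H B ev] fmat_cinner_basis)

lemma mabs_spec:
  assumes A: "transpose A = - A"
  shows "\<exists>B \<mu>. eigsys (csmul \<i> (cmat A)) B \<mu> \<and> cmat (mabs A) = fmat B (\<lambda>b. \<bar>\<mu> b\<bar>)"
proof -
  obtain B \<mu> where eB: "eigsys (csmul \<i> (cmat A)) B \<mu>" using spectral herm_iA[OF A] by blast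
  have fB: "finite B" "onset B" using onset_fin[OF eB] by auto
  have HH: "csmul \<i> (cmat A) ** csmul \<i> (cmat A) = cmat (transpose A ** A)"
    by (simp add: csmul_mult cmat_mult[symmetric] A csmul_cmat_neg matrix_neg_mult)
  have N: "cpsd (fmat B (\<lambda>b. \<bar>\<mu> b\<bar>))" by (rule cpsd_fmat) simp
  have NN: "fmat B (\<lambda>b. \<bar>\<mu> b\<bar>) ** fmat B (\<lambda>b. \<bar>\<mu> b\<bar>) = cmat (transpose A ** A)"
  proof -
    have "fmat B (\<lambda>b. \<bar>\<mu> b\<bar>) ** fmat B (\<lambda>b. \<bar>\<mu> b\<bar>) = fmat B (\<lambda>b. \<mu> b * \<mu> b)"
      unfolding fmat_mult[OF fB] by (simp add: abs_mult_self_eq)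
    also have "\<dots> = fmat B \<mu> ** fmat B \<mu>" by (rule fmat_mult[OF fB, symmetric])
    also have "\<dots> = cmat (transpose A ** A)" using eigsys_fmat[OF eB] HH by simp
    finally show ?thesis .
  qed
  have M: "cpsd (cmat (mabs A))" unfolding mabs_def by (intro rpsd_cpsd msqrt rpsd_gram)
  have MM: "cmat (mabs A) ** cmat (mabs A) = cmat (transpose A ** A)"
    unfolding mabs_def cmat_mult[symmetric] by (simp only: msqrt(2)[OF rpsd_gram[of A]])
  have "cmat (mabs A) = fmat B (\<lambda>b. \<bar>\<mu> b\<bar>)" using psd_sqrt_unique[OF M N] MM NN by simp
  thus ?thesis using eB by blast
qed

lemma mabs_dom:
  assumes A: "transpose A = - A" and b0: "0 \<le> \<beta>" and b1: "\<beta> \<le> 1"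
  shows "0 \<le> Re (cinner x ((cmat (mabs A) - \<beta> *\<^sub>R csmul \<i> (cmat A)) *v x))"
proof -
  obtain B \<mu> where eB: "eigsys (csmul \<i> (cmat A)) B \<mu>" and M: "cmat (mabs A) = fmat B (\<lambda>b. \<bar>\<mu> b\<bar>)"
    using mabs_spec[OF A] by blast
  have H: "csmul \<i> (cmat A) = fmat B \<mu>" by (rule eigsys_fmat[OF eB])
  have "Re (cinner x ((cmat (mabs A) - \<beta> *\<^sub>R csmul \<i> (cmat A)) *v x)) =
        (\<Sum>b\<in>B. (\<bar>\<mu> b\<bar> - \<beta> * \<mu> b) * (cmod (cinner b x))^2)"
    unfolding M H by (simp add: matrix_vector_mult_diff_rdistrib scaleR_mv cinner_diff_right
        cinner_scaleR_right cinner_fmat Re_sum sum_distrib_left sum_subtractf algebra_simps)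
  also have "\<dots> \<ge> 0"
  proof (intro sum_nonneg mult_nonneg_nonneg)
    fix b show "0 \<le> \<bar>\<mu> b\<bar> - \<beta> * \<mu> b"
    proof (cases "\<mu> b \<ge> 0")
      case True thus ?thesis using b0 b1 by (simp add: mult_left_le_one_le)
    next
      case False
      hence "\<beta> * \<mu> b \<le> 0" using b0 by (simp add: mult_nonneg_nonpos)
      thus ?thesis using False by linarith
    qed
  qed simp
  finally show ?thesis .
qed

lemma mabs_trace_le:
  assumes A: "transpose A = - A"
    and P: "\<forall>x. 0 \<le> Re (cinner x ((cmat R + csmul \<i> (cmat A)) *v x))"
  shows "trace (mabs A) \<le> trace R"
proof -
  obtain B \<mu> where eB: "eigsys (csmul \<i> (cmat A)) B \<mu>" and M: "cmat (mabs A) = fmat B (\<lambda>b. \<bar>\<mu> b\<bar>)"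
    using mabs_spec[OF A] by blast
  have fB: "finite B" using onset_fin[OF eB] by auto
  define r where "r b = Re (cinner b (cmat R *v b))" for b
  have ineq: "\<bar>\<mu> b\<bar> \<le> r b" if b: "b \<in> B" for b
  proof -
    have mu: "cinner b (csmul \<i> (cmat A) *v b) = of_real (\<mu> b)" by (rule eigsys_cinner_eig[OF eB b])
    have "0 \<le> Re (cinner b ((cmat R + csmul \<i> (cmat A)) *v b))" using P by blast
    hence 1: "0 \<le> r b + \<mu> b" by (simp add: r_def matrix_vector_mult_add_rdistrib cinner_add_right mu)
    have "0 \<le> Re (cinner (vconj b) ((cmat R + csmul \<i> (cmat A)) *v vconj b))" using P by blast
    hence "0 \<le> Re (cinner b (cconj (cmat R + csmul \<i> (cmat A)) *v b))" by (simp add: cinner_cconj)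
    moreover have "cconj (cmat R + csmul \<i> (cmat A)) = cmat R - csmul \<i> (cmat A)"
    proof -
      have "cconj (csmul \<i> (cmat A)) = - csmul \<i> (cmat A)"
        unfolding cconj_csmul cconj_cmat by (simp add: csmul_def vec_eq_iff)
      thus ?thesis by (simp add: cconj_add cconj_cmat)
    qed
    ultimately have 2: "0 \<le> r b - \<mu> b"
      by (simp add: r_def matrix_vector_mult_diff_rdistrib cinner_diff_right mu)
    show ?thesis using 1 2 by linarith
  qed
  have "trace (mabs A) = Re (trace (cmat (mabs A)))" by (simp add: trace_cmat)
  also have "\<dots> = (\<Sum>b\<in>B. \<bar>\<mu> b\<bar>)" unfolding M trace_fmat[OF eB] by simp
  also have "\<dots> \<le> (\<Sum>b\<in>B. r b)" using ineq by (rule sum_mono)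
  also have "\<dots> = Re (trace (cmat R))" unfolding eigsys_trace[OF eB, of "cmat R"] r_def by (simp add: Re_sum)
  also have "\<dots> = trace R" by (simp add: trace_cmat)
  finally show ?thesis .
qed


type_synonym 'n cm = "complex^'n^'n"

lemma mm_add_r: "(A + B) ** (C::'a::semiring_1^'n^'n) = A ** C + B ** C"
  by (simp add: matrix_matrix_mult_def vec_eq_iff sum.distrib algebra_simps)
lemma mm_diff_l: "(C::'a::ring_1^'n^'n) ** (A - B) = C ** A - C ** B"
  by (simp add: matrix_matrix_mult_def vec_eq_iff sum_subtractf algebra_simps)
lemma mm_diff_r: "(A - B) ** (C::'a::ring_1^'n^'n) = A ** C - B ** C"
  by (simp add: matrix_matrix_mult_def vec_eq_iff sum_subtractf algebra_simps)
lemma mm_scaleR_l: "(r *\<^sub>R A) ** (C::complex^'n^'n) = r *\<^sub>R (A ** C)"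
  by (simp add: scalar_matrix_assoc)
lemma mm_scaleR_r: "(C::complex^'n^'n) ** (r *\<^sub>R A) = r *\<^sub>R (C ** A)"
  by (simp add: matrix_scalar_ac scalar_matrix_assoc)
lemma trace_scaleR: "trace (r *\<^sub>R (A::complex^'n^'n)) = of_real r * trace A"
  unfolding trace_def vector_scaleR_component by (simp add: sum_distrib_left scaleR_conv_of_real)
lemma Re_ofreal_mult: "Re (complex_of_real r * z) = r * Re z"
  by simp

lemma trace_cyc3: "trace (A ** B ** (C::'a::comm_semiring_1^'n^'n)) = trace (B ** C ** A)"
  by (metis matrix_mul_assoc trace_mul_sym)
lemma trace_cadj_mult: "trace (cadj (A::complex^'n^'n)) = cnj (trace A)"
  by (rule trace_cadj)

lemma herm_trace_real:
  assumes "hermitian X" "hermitian Y"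
  shows "trace (X ** Y) = of_real (Re (trace (X ** Y)))"
proof -
  have "cnj (trace (X ** Y)) = trace (Y ** X)"
    using assms by (simp add: trace_cadj[symmetric] cadj_mult hermitian_def)
  also have "\<dots> = trace (X ** Y)" by (rule trace_mul_sym)
  finally have "Im (trace (X ** Y)) = 0" by (metis cnj.sel(2) neg_equal_zero)
  thus ?thesis by (simp add: complex_eq_iff)
qed

lemma trace_pd_entry: "(cadj X ** rho ** X) $ k $ k = cinner (column k X) (rho *v column k X)"
proof -
  have "(cadj X ** rho ** X) $ k $ k = (\<Sum>j\<in>UNIV. \<Sum>i\<in>UNIV. cnj (X$i$k) * rho$i$j * X$j$k)"
    by (simp add: matrix_matrix_mult_def cadj_def sum_distrib_right)
  also have "\<dots> = (\<Sum>i\<in>UNIV. \<Sum>j\<in>UNIV. cnj (X$i$k) * rho$i$j * X$j$k)" by (rule sum.swap)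
  also have "\<dots> = cinner (column k X) (rho *v column k X)"
    by (simp add: cinner_def column_def matrix_vector_mult_def sum_distrib_left mult.assoc)
  finally show ?thesis .
qed

lemma trace_pd_cols: "trace (cadj X ** rho ** X) = (\<Sum>k\<in>UNIV. cinner (column k X) (rho *v column k X))"
  unfolding trace_def trace_pd_entry ..

lemma cadj_eq_0: "cadj X = 0 \<Longrightarrow> X = 0"
  by (metis cadj_cadj cadj_zero)

lemma trace_pd:
  assumes rho: "cpd rho"
  shows "0 \<le> Re (trace (cadj X ** rho ** X))"
    and "Re (trace (cadj X ** rho ** X)) = 0 \<Longrightarrow> X = 0"
proof -
  have nn: "0 \<le> Re (cinner v (rho *v v))" for v
    using rho unfolding cpd_def by (cases "v = 0") (auto intro: less_imp_le)
  show "0 \<le> Re (trace (cadj X ** rho ** X))"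
    unfolding trace_pd_cols Re_sum by (intro sum_nonneg nn)
  assume z: "Re (trace (cadj X ** rho ** X)) = 0"
  hence "\<forall>k\<in>UNIV. Re (cinner (column k X) (rho *v column k X)) = 0"
    unfolding trace_pd_cols Re_sum by (subst sum_nonneg_eq_0_iff[symmetric]) (auto intro: nn)
  hence "column k X = 0" for k using rho unfolding cpd_def by (metis UNIV_I less_irrefl)
  thus "X = 0" by (simp add: column_def vec_eq_iff)
qed

lemma trace_pd2:
  assumes rho: "cpd rho"
  shows "0 \<le> Re (trace (X ** rho ** cadj X))"
    and "Re (trace (X ** rho ** cadj X)) = 0 \<Longrightarrow> X = 0"
  using trace_pd[OF rho, of "cadj X"] by (auto simp: cadj_eq_0)

definition phi :: "real \<Rightarrow> real \<Rightarrow> complex^'n^'n \<Rightarrow> complex^'n^'n \<Rightarrow> complex^'n^'n" where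
  "phi a b rho L = a *\<^sub>R (rho ** L) + b *\<^sub>R (L ** rho)"

lemma linear_phi: "linear (phi a b rho)"
  by (rule linearI) (simp_all add: phi_def matrix_add_ldistrib mm_add_r mm_scaleR_l mm_scaleR_r
      scaleR_add_right algebra_simps)

lemma phi_inj0:
  assumes rho: "cpd rho" and ab: "0 \<le> a" "0 \<le> b" "a + b = 1" and z: "phi a b rho L = 0"
  shows "L = 0"
proof -
  have "trace (cadj L ** phi a b rho L) = 0" using z by (simp add: trace_zero)
  hence ce: "of_real a * trace (cadj L ** rho ** L) + of_real b * trace (L ** rho ** cadj L) = 0"
    unfolding phi_def by (simp add: matrix_add_ldistrib mm_scaleR_r trace_add trace_scaleR
        matrix_mul_assoc trace_cyc3[of "cadj L" L rho])
  hence e: "a * Re (trace (cadj L ** rho ** L)) + b * Re (trace (L ** rho ** cadj L)) = 0"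
    using arg_cong[OF ce, of Re] unfolding plus_complex.sel Re_ofreal_mult by simp
  have t1: "0 \<le> Re (trace (cadj L ** rho ** L))" by (rule trace_pd(1)[OF rho])
  have t2: "0 \<le> Re (trace (L ** rho ** cadj L))" by (rule trace_pd2(1)[OF rho])
  show ?thesis
  proof (cases "a = 0")
    case True
    hence "b = 1" using ab by simp
    hence "Re (trace (L ** rho ** cadj L)) = 0" using e True by simp
    thus ?thesis by (rule trace_pd2(2)[OF rho])
  next
    case False
    hence "0 < a" using ab by simp
    have "0 \<le> b * Re (trace (L ** rho ** cadj L))" using t2 ab(2) by simp
    hence "a * Re (trace (cadj L ** rho ** L)) \<le> 0" using e by linarith
    hence "Re (trace (cadj L ** rho ** L)) \<le> 0" using \<open>0 < a\<close> by (simp add: mult_le_0_iff)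
    hence "Re (trace (cadj L ** rho ** L)) = 0" using t1 by simp
    thus ?thesis by (rule trace_pd(2)[OF rho])
  qed
qed

lemma phi_bij:
  assumes rho: "cpd rho" and ab: "0 \<le> a" "0 \<le> b" "a + b = 1"
  shows "inj (phi a b rho)" "surj (phi a b rho)"
proof -
  show i: "inj (phi a b rho)"
    using linear_injective_0[OF linear_phi] phi_inj0[OF assms] by blast
  show "surj (phi a b rho)" by (rule linear_inj_imp_surj[OF linear_phi i])
qed

lemma Lbeta_spec:
  assumes rho: "cpd rho" and b0: "0 \<le> \<beta>" and b1: "\<beta> \<le> 1"
  shows "D = phi ((1 + \<beta>) / 2) ((1 - \<beta>) / 2) rho (Lbeta \<beta> rho D)"
proof -
  let ?a = "(1 + \<beta>) / 2" and ?b = "(1 - \<beta>) / 2"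
  have ab: "0 \<le> ?a" "0 \<le> ?b" "?a + ?b = 1" using b0 b1 by (auto simp: field_simps)
  obtain L where L: "D = phi ?a ?b rho L" using phi_bij(2)[OF rho ab] by (metis surjD)
  have "\<exists>!L. D = phi ?a ?b rho L" using L phi_bij(1)[OF rho ab] by (metis injD)
  hence "D = phi ?a ?b rho (THE L. D = phi ?a ?b rho L)" by (rule theI')
  thus ?thesis unfolding Lbeta_def phi_def .
qed

lemma cadj_phi: "hermitian rho \<Longrightarrow> cadj (phi a b rho L) = phi b a rho (cadj L)"
  unfolding phi_def hermitian_def by (simp add: cadj_add cadj_scaleR cadj_mult add.commute)

lemma SLD_spec:
  assumes rho: "cpd rho" and D: "hermitian D"
  shows "hermitian (SLD rho D)" "D = phi (1/2) (1/2) rho (SLD rho D)"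
proof -
  have ab: "0 \<le> (1/2::real)" "(1/2::real) + 1/2 = 1" by auto
  have rh: "hermitian rho" using rho unfolding cpd_def by blast
  obtain L where L: "D = phi (1/2) (1/2) rho L" using phi_bij(2)[OF rho ab(1) ab(1) ab(2)] by (metis surjD)
  have inj: "inj (phi (1/2) (1/2) rho)" using phi_bij(1)[OF rho ab(1) ab(1) ab(2)] .
  have "phi (1/2) (1/2) rho (cadj L) = phi (1/2) (1/2) rho L"
    using cadj_phi[OF rh, of "1/2" "1/2" L] D L unfolding hermitian_def by simp
  hence hL: "hermitian L" unfolding hermitian_def using inj by (metis injD)
  have eq: "(\<lambda>L. hermitian L \<and> D = (1/2) *\<^sub>R (rho ** L + L ** rho)) = (\<lambda>L. hermitian L \<and> D = phi (1/2) (1/2) rho L)"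
    by (simp add: phi_def scaleR_add_right)
  have "\<exists>!L. hermitian L \<and> D = phi (1/2) (1/2) rho L" using hL L inj by (metis injD)
  hence "hermitian (SLD rho D) \<and> D = phi (1/2) (1/2) rho (SLD rho D)"
    unfolding SLD_def eq by (rule theI')
  thus "hermitian (SLD rho D)" "D = phi (1/2) (1/2) rho (SLD rho D)" by auto
qed

lemma linear_cadj: "linear (cadj :: complex^'n^'n \<Rightarrow> _)"
  by (rule linearI) (simp_all add: cadj_add cadj_scaleR)

lemma herm_deriv:
  fixes rho :: "real^'d \<Rightarrow> complex^'n^'n"
  assumes "open \<Theta>" "\<theta>0 \<in> \<Theta>" "\<forall>\<theta>\<in>\<Theta>. density (rho \<theta>)" "(rho has_derivative Drho) (at \<theta>0)"
  shows "hermitian (Drho h)"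
proof -
  have bl: "bounded_linear (cadj :: complex^'n^'n \<Rightarrow> _)" using linear_cadj linear_conv_bounded_linear by blast
  have "((\<lambda>x. cadj (rho x)) has_derivative (\<lambda>x. cadj (Drho x))) (at \<theta>0)"
    by (rule bounded_linear.has_derivative[OF bl assms(4)])
  moreover have "cadj (rho x) = rho x" if "x \<in> \<Theta>" for x
    using assms(3) that unfolding density_def cpsd_def hermitian_def by blast
  ultimately have "(rho has_derivative (\<lambda>x. cadj (Drho x))) (at \<theta>0)"
    using has_derivative_transform_within_open[OF _ assms(1) assms(2)] by blast
  hence "(\<lambda>x. cadj (Drho x)) = Drho" using assms(4) has_derivative_unique by blast
  thus ?thesis unfolding hermitian_def by metis
qed


lemma matrix_sum_left_distrib: "(\<Sum>b\<in>B. f b) ** (M::'a::semiring_1^'n^'n) = (\<Sum>b\<in>B. f b ** M)"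
  by (induct B rule: infinite_finite_induct) (simp_all add: mm_add_r)

lemma trace_bilin:
  "trace ((\<Sum>i\<in>UNIV. c i *\<^sub>R X i) ** (\<Sum>j\<in>UNIV. d j *\<^sub>R Y j)) =
   (\<Sum>i\<in>UNIV. \<Sum>j\<in>UNIV. of_real (c i * d j) * trace (X i ** (Y j::complex^'n^'n)))"
  by (simp add: matrix_sum_left_distrib matrix_sum_right_distrib trace_sum mm_scaleR_l mm_scaleR_r
      trace_scaleR mult.assoc sum_distrib_left) (subst sum.swap, simp add: ac_simps)

lemma unbiased_exists:
  fixes D :: "'d::finite \<Rightarrow> complex^'n^'n"
  assumes rho: "cpd rho" and Dh: "\<forall>i. hermitian (D i)"
    and ind: "\<forall>c::real^'d. (\<Sum>i\<in>UNIV. c$i *\<^sub>R SLD rho (D i)) = 0 \<longrightarrow> c = 0"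
  shows "\<exists>B. locally_unbiased D B"
proof -
  define S where "S i = SLD rho (D i)" for i
  have Sh: "hermitian (S i)" for i unfolding S_def using SLD_spec(1)[OF rho] Dh by blast
  have Seq: "D i = phi (1/2) (1/2) rho (S i)" for i unfolding S_def using SLD_spec(2)[OF rho] Dh by blast
  define K :: "real^'d^'d" where "K = (\<chi> i j. Re (trace (D i ** S j)))"
  have tK: "trace (D i ** S j) = of_real (K$i$j)" for i j
    unfolding K_def using herm_trace_real[OF Dh[rule_format] Sh] by simp
  have Kinj: "c = 0" if Kc: "K *v c = 0" for c
  proof -
    define Sc where "Sc = (\<Sum>i\<in>UNIV. c$i *\<^sub>R S i)"
    have Sch: "hermitian Sc" unfolding Sc_def hermitian_def cadj_sum cadj_scaleR using Sh
      unfolding hermitian_def by simp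
    have Dc: "(\<Sum>i\<in>UNIV. c$i *\<^sub>R D i) = phi (1/2) (1/2) rho Sc"
      unfolding Sc_def Seq linear_sum[OF linear_phi] linear_cmul[OF linear_phi] ..
    have "c \<bullet> (K *v c) = Re (trace ((\<Sum>i\<in>UNIV. c$i *\<^sub>R D i) ** Sc))"
      unfolding Sc_def trace_bilin tK
      by (simp add: inner_vec_def matrix_vector_mult_def Re_sum sum_distrib_left algebra_simps)
    also have "trace ((\<Sum>i\<in>UNIV. c$i *\<^sub>R D i) ** Sc) = trace (cadj Sc ** rho ** Sc)"
    proof -
      have "trace ((\<Sum>i\<in>UNIV. c$i *\<^sub>R D i) ** Sc) =
            of_real (1/2) * trace (rho ** Sc ** Sc) + of_real (1/2) * trace (Sc ** rho ** Sc)"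
        unfolding Dc phi_def by (simp add: mm_add_r mm_scaleR_l trace_add trace_scaleR)
      also have "trace (rho ** Sc ** Sc) = trace (Sc ** rho ** Sc)"
        using trace_cyc3[of rho Sc Sc] trace_cyc3[of Sc Sc rho] by simp
      finally show ?thesis using Sch unfolding hermitian_def by simp
    qed
    finally have "Re (trace (cadj Sc ** rho ** Sc)) = 0" using Kc by simp
    hence "Sc = 0" by (rule trace_pd(2)[OF rho])
    thus "c = 0" using ind unfolding Sc_def S_def by blast
  qed
  obtain Kl where "Kl ** K = mat 1" using matrix_left_invertible_ker[of K] Kinj by blast
  hence KKl: "K ** Kl = mat 1" using matrix_left_right_inverse by blast
  define B where "B j = (\<Sum>k\<in>UNIV. (Kl$k$j) *\<^sub>R S k)" for j
  show ?thesis
  proof (intro exI[of _ B], unfold locally_unbiased_def, intro conjI allI)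
    fix j show "hermitian (B j)" unfolding B_def hermitian_def cadj_sum cadj_scaleR using Sh
      unfolding hermitian_def by simp
  next
    fix i j
    have "trace (D i ** B j) = (\<Sum>k\<in>UNIV. of_real (K$i$k * Kl$k$j))"
      unfolding B_def by (simp add: matrix_sum_right_distrib trace_sum mm_scaleR_r trace_scaleR tK mult.commute)
    also have "\<dots> = of_real ((K ** Kl)$i$j)" by (simp add: matrix_matrix_mult_def)
    also have "\<dots> = (if i = j then 1 else 0)" unfolding KKl by (simp add: mat_def)
    finally show "trace (D i ** B j) = (if i = j then 1 else 0)" .
  qed
qed


definition ip :: "real \<Rightarrow> real \<Rightarrow> complex^'n^'n \<Rightarrow> complex^'n^'n \<Rightarrow> complex^'n^'n \<Rightarrow> complex" where
  "ip a b rho X Y = of_real a * trace (rho ** Y ** cadj X) + of_real b * trace (rho ** cadj X ** Y)"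

lemma trace_csmul: "trace (csmul c M) = c * trace M"
  by (simp add: trace_def csmul_def sum_distrib_left)
lemma mm_csmul_l: "csmul c A ** B = csmul c (A ** B)"
  by (simp add: csmul_def matrix_matrix_mult_def vec_eq_iff sum_distrib_left mult.assoc)
lemma mm_csmul_r: "A ** csmul c B = csmul c (A ** B)"
  by (simp add: csmul_def matrix_matrix_mult_def vec_eq_iff sum_distrib_left algebra_simps)
lemma cadj_csmul': "cadj (csmul c A) = csmul (cnj c) (cadj A)"
  by (simp add: csmul_def cadj_def vec_eq_iff)

lemma ip_conj:
  assumes rh: "hermitian rho"
  shows "cnj (ip a b rho X Y) = ip a b rho Y X"
proof -
  have 1: "cnj (trace (rho ** Y ** cadj X)) = trace (rho ** X ** cadj Y)"
    using rh unfolding hermitian_def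
    by (simp add: trace_cadj[symmetric] cadj_mult matrix_mul_assoc trace_cyc3[of X "cadj Y" rho] trace_cyc3[of "cadj Y" rho X])
  have 2: "cnj (trace (rho ** cadj X ** Y)) = trace (rho ** cadj Y ** X)"
    using rh unfolding hermitian_def
    by (simp add: trace_cadj[symmetric] cadj_mult matrix_mul_assoc trace_cyc3[of "cadj Y" X rho] trace_cyc3[of X rho "cadj Y"])
  show ?thesis unfolding ip_def by (simp add: 1 2)
qed

lemma ip_add_right: "ip a b rho X (Y1 + Y2) = ip a b rho X Y1 + ip a b rho X Y2"
  unfolding ip_def by (simp add: matrix_add_ldistrib mm_add_r trace_add algebra_simps)
lemma ip_diff_right: "ip a b rho X (Y1 - Y2) = ip a b rho X Y1 - ip a b rho X Y2"
  unfolding ip_def by (simp add: mm_diff_l mm_diff_r trace_sub algebra_simps)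
lemma ip_csmul_right: "ip a b rho X (csmul c Y) = c * ip a b rho X Y"
  unfolding ip_def by (simp add: mm_csmul_l mm_csmul_r trace_csmul algebra_simps)
lemma ip_zero_right: "ip a b rho X 0 = 0"
  unfolding ip_def by (simp add: trace_zero)
lemma ip_sum_right: "ip a b rho X (\<Sum>k\<in>K. csmul (f k) (Y k)) = (\<Sum>k\<in>K. f k * ip a b rho X (Y k))"
  by (induct K rule: infinite_finite_induct) (simp_all add: ip_zero_right ip_add_right ip_csmul_right)

lemma ip_left_via_conj:
  assumes rh: "hermitian rho"
  shows "ip a b rho X Z = cnj (ip a b rho Z X)"
  using ip_conj[OF rh, of a b Z X] by simp

lemma ip_sum_left:
  assumes rh: "hermitian rho"
  shows "ip a b rho (\<Sum>k\<in>K. csmul (f k) (Y k)) Z = (\<Sum>k\<in>K. cnj (f k) * ip a b rho (Y k) Z)"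
  unfolding ip_left_via_conj[OF rh, of a b _ Z] ip_sum_right by simp

lemma ip_diff_left:
  assumes rh: "hermitian rho"
  shows "ip a b rho (X1 - X2) Z = ip a b rho X1 Z - ip a b rho X2 Z"
  unfolding ip_left_via_conj[OF rh, of a b _ Z] ip_diff_right by simp

lemma ip_pos:
  assumes rho: "cpd rho" and ab: "0 \<le> a" "0 \<le> b" "a + b = 1"
  shows "0 \<le> Re (ip a b rho X X)" "Re (ip a b rho X X) = 0 \<Longrightarrow> X = 0"
proof -
  have e: "Re (ip a b rho X X) = a * Re (trace (cadj X ** rho ** X)) + b * Re (trace (X ** rho ** cadj X))"
    unfolding ip_def
    using trace_cyc3[of rho X "cadj X"] trace_cyc3[of X "cadj X" rho]
      trace_cyc3[of rho "cadj X" X] trace_cyc3[of "cadj X" X rho]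
    by (simp add: Re_ofreal_mult)
  have t1: "0 \<le> Re (trace (cadj X ** rho ** X))" by (rule trace_pd(1)[OF rho])
  have t2: "0 \<le> Re (trace (X ** rho ** cadj X))" by (rule trace_pd2(1)[OF rho])
  show "0 \<le> Re (ip a b rho X X)" unfolding e using t1 t2 ab by simp
  assume z: "Re (ip a b rho X X) = 0"
  show "X = 0"
  proof (cases "a = 0")
    case True
    hence "b = 1" using ab by simp
    hence "Re (trace (X ** rho ** cadj X)) = 0" using z e True by simp
    thus ?thesis by (rule trace_pd2(2)[OF rho])
  next
    case False
    hence "0 < a" using ab by simp
    have "0 \<le> b * Re (trace (X ** rho ** cadj X))" using t2 ab(2) by simp
    hence "a * Re (trace (cadj X ** rho ** X)) \<le> 0" using e z by linarith
    hence "Re (trace (cadj X ** rho ** X)) \<le> 0" using \<open>0 < a\<close> by (simp add: mult_le_0_iff)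
    hence "Re (trace (cadj X ** rho ** X)) = 0" using t1 by simp
    thus ?thesis by (rule trace_pd(2)[OF rho])
  qed
qed

lemma ip_L:
  assumes "D = phi a b rho L"
  shows "ip a b rho X L = trace (D ** cadj X)"
  unfolding assms ip_def phi_def
  by (simp add: mm_add_r mm_scaleR_l trace_add trace_scaleR trace_cyc3[of L rho "cadj X"])

definition comb :: "complex^'d \<Rightarrow> ('d \<Rightarrow> complex^'n^'n) \<Rightarrow> complex^'n^'n" where
  "comb x Y = (\<Sum>k\<in>UNIV. csmul (x$k) (Y k))"

lemma ip_comb:
  assumes rh: "hermitian rho"
  shows "ip a b rho (comb x Y) (comb y Y') = cinner x ((\<chi> i j. ip a b rho (Y i) (Y' j)) *v y)"
  unfolding comb_def ip_sum_left[OF rh] ip_sum_right cinner_def matrix_vector_mult_def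
  by (simp add: sum_distrib_left mult.commute mult.left_commute) (rule sum.swap)


lemma ip_zero_left: "hermitian rho \<Longrightarrow> ip a b rho 0 Z = 0"
  using ip_left_via_conj[of rho a b 0 Z] by (simp add: ip_zero_right)

lemma sum_ifmult: "(\<Sum>k\<in>(UNIV::'d::finite set). f k * (if k = m then 1 else 0)) = (f m :: 'a::comm_ring_1)"
proof -
  have "(\<Sum>k\<in>(UNIV::'d set). f k * (if k = m then 1 else 0)) = (\<Sum>k\<in>UNIV. if k = m then f k else 0)"
    by (intro sum.cong) auto
  thus ?thesis by simp
qed

lemma CR:
  fixes D :: "'d::finite \<Rightarrow> complex^'n^'n" and B :: "'d \<Rightarrow> complex^'n^'n"
  assumes rho: "cpd rho" and b0: "0 \<le> \<beta>" and b1: "\<beta> \<le> 1" and Dh: "\<forall>i. hermitian (D i)"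
    and ub: "locally_unbiased D B"
  defines "J \<equiv> Jbeta \<beta> rho D" and "W \<equiv> matrix_inv (Jbeta \<beta> rho D)" and "Z \<equiv> Zmat rho B"
  shows "J ** W = mat 1" "hermitian W"
    "\<forall>x. Re (cinner x (W *v x)) \<le>
        Re (cinner x ((cmat (Re_mat Z) + csmul (\<i> * of_real \<beta>) (cmat (Im_mat Z))) *v x))"
proof -
  define a where "a = (1 + \<beta>) / 2"
  define b where "b = (1 - \<beta>) / 2"
  have ab: "0 \<le> a" "0 \<le> b" "a + b = 1" using b0 b1 unfolding a_def b_def by (auto simp: field_simps)
  have rh: "hermitian rho" using rho unfolding cpd_def by blast
  define L where "L i = Lbeta \<beta> rho (D i)" for i
  have DL: "D i = phi a b rho (L i)" for i unfolding L_def a_def b_def by (rule Lbeta_spec[OF rho b0 b1])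
  have Bh: "hermitian (B j)" for j using ub unfolding locally_unbiased_def by blast
  have tDB: "trace (D i ** B j) = (if i = j then 1 else 0)" for i j
    using ub unfolding locally_unbiased_def by blast
  have ipBL: "ip a b rho (B j) (L i) = (if i = j then 1 else 0)" for i j
    unfolding ip_L[OF DL] using Bh[of j] tDB unfolding hermitian_def by simp
  have ipLB: "ip a b rho (L i) (B j) = (if i = j then 1 else 0)" for i j
    by (subst ip_left_via_conj[OF rh, of a b "L i" "B j"]) (simp add: ipBL)
  have ipLL: "ip a b rho (L i) (L j) = J$i$j" for i j
  proof -
    have "ip a b rho (L i) (L j) = cnj (trace (D i ** cadj (L j)))"
      by (subst ip_left_via_conj[OF rh, of a b "L i" "L j"]) (simp add: ip_L[OF DL])
    also have "\<dots> = trace (L j ** D i)"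
      using Dh unfolding trace_cadj[symmetric] cadj_mult hermitian_def by simp
    also have "\<dots> = trace (D i ** L j)" by (rule trace_mul_sym)
    also have "\<dots> = J$i$j" unfolding J_def Jbeta_def L_def by simp
    finally show ?thesis .
  qed
  have GLL: "(\<chi> i j. ip a b rho (L i) (L j)) = J" by (simp add: ipLL vec_eq_iff)
  have GLB: "(\<chi> i j. ip a b rho (L i) (B j)) = mat 1" by (simp add: ipLB vec_eq_iff mat_def)
  have GBL: "(\<chi> i j. ip a b rho (B i) (L j)) = mat 1" by (simp add: ipBL vec_eq_iff mat_def)
  have Jh: "cadj J = J"
    unfolding cadj_def vec_eq_iff ipLL[symmetric] by (simp add: ip_conj[OF rh])
  have Jinj: "x = 0" if Jx: "J *v x = 0" for x
  proof -
    have "ip a b rho (comb x L) (comb x L) = 0" unfolding ip_comb[OF rh] GLL Jx by simp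
    hence cz: "comb x L = 0" using ip_pos(2)[OF rho ab] by simp
    have "cnj (x$m) = 0" for m
    proof -
      have "ip a b rho (comb x L) (B m) = (\<Sum>k\<in>UNIV. cnj (x$k) * ip a b rho (L k) (B m))"
        unfolding comb_def by (rule ip_sum_left[OF rh])
      also have "\<dots> = cnj (x$m)" by (simp add: ipLB sum_ifmult)
      finally show ?thesis using cz ip_zero_left[OF rh] by simp
    qed
    thus "x = 0" by (simp add: vec_eq_iff)
  qed
  have inv: "invertible J" unfolding invertible_left_inverse matrix_left_invertible_ker using Jinj by blast
  have JW: "J ** W = mat 1 \<and> W ** J = mat 1"
    unfolding W_def matrix_inv_def J_def[symmetric] using inv unfolding invertible_def by (rule someI_ex)
  show "J ** W = mat 1" using JW by blast
  have "cadj W ** J = cadj (J ** W)" by (simp add: cadj_mult Jh)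
  also have "\<dots> = mat 1" using JW by (simp add: cadj_mat)
  finally have WJ: "cadj W ** J = mat 1" .
  have "cadj W = cadj W ** (J ** W)" using JW by simp
  also have "\<dots> = (cadj W ** J) ** W" by (rule matrix_mul_assoc)
  finally have "cadj W = W" using WJ by simp
  thus Wh: "hermitian W" unfolding hermitian_def .
  show "\<forall>x. Re (cinner x (W *v x)) \<le>
        Re (cinner x ((cmat (Re_mat Z) + csmul (\<i> * of_real \<beta>) (cmat (Im_mat Z))) *v x))"
  proof
    fix x
    define y where "y = W *v x"
    define X where "X = comb x B"
    define Y where "Y = comb y L"
    have JWx: "J *v y = x" unfolding y_def matrix_vector_mul_assoc using JW by simp
    have e2: "ip a b rho X Y = cinner x y" unfolding X_def Y_def ip_comb[OF rh] GBL by simp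
    have e3: "ip a b rho Y X = cinner y x" unfolding X_def Y_def ip_comb[OF rh] GLB by simp
    have e4: "ip a b rho Y Y = cinner y x" unfolding Y_def ip_comb[OF rh] GLL JWx ..
    have "ip a b rho (X - Y) (X - Y) = ip a b rho X X - cinner x y"
      unfolding ip_diff_left[OF rh] ip_diff_right e2 e3 e4 by simp
    hence "0 \<le> Re (ip a b rho X X) - Re (cinner x y)" using ip_pos(1)[OF rho ab, of "X - Y"] by simp
    moreover have "cinner x y = cinner x (W *v x)" unfolding y_def ..
    moreover have "ip a b rho X X = cinner x ((\<chi> i j. ip a b rho (B i) (B j)) *v x)"
      unfolding X_def ip_comb[OF rh] ..
    moreover have "(\<chi> i j. ip a b rho (B i) (B j)) = cmat (Re_mat Z) + csmul (\<i> * of_real \<beta>) (cmat (Im_mat Z))"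
    proof -
    have entry: "ip a b rho (B i) (B j) = (cmat (Re_mat Z) + csmul (\<i> * of_real \<beta>) (cmat (Im_mat Z))) $ i $ j" for i j
    proof -
      have "cnj (Z$i$j) = trace (cadj (rho ** B j ** B i))" by (simp add: Z_def Zmat_def trace_cadj)
      also have "cadj (rho ** B j ** B i) = B i ** B j ** rho"
        using rh Bh unfolding hermitian_def by (simp add: cadj_mult matrix_mul_assoc)
      also have "trace (B i ** B j ** rho) = trace (rho ** (B i ** B j))" by (rule trace_mul_sym)
      finally have zc: "trace (rho ** B i ** B j) = cnj (Z$i$j)" by (simp add: matrix_mul_assoc)
      have "ip a b rho (B i) (B j) = of_real a * Z$i$j + of_real b * cnj (Z$i$j)"
        unfolding ip_def Z_def using Bh zc unfolding hermitian_def Z_def by (simp add: Zmat_def)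
      thus "ip a b rho (B i) (B j) = (cmat (Re_mat Z) + csmul (\<i> * of_real \<beta>) (cmat (Im_mat Z))) $ i $ j"
        by (simp add: cmat_def Re_mat_def Im_mat_def csmul_def complex_eq_iff a_def b_def field_simps)
    qed
    show ?thesis unfolding vec_eq_iff using entry by simp
    qed
    ultimately show "Re (cinner x (W *v x)) \<le>
        Re (cinner x ((cmat (Re_mat Z) + csmul (\<i> * of_real \<beta>) (cmat (Im_mat Z))) *v x))" by simp
  qed
qed


lemma Zmat_herm:
  assumes rh: "hermitian rho" and Bh: "\<forall>j. hermitian (B j)"
  shows "hermitian (Zmat rho B)"
proof -
  have "cnj (Zmat rho B $ j $ i) = Zmat rho B $ i $ j" for i j
  proof -
    have "cnj (Zmat rho B $ j $ i) = trace (cadj (rho ** B i ** B j))" by (simp add: Zmat_def trace_cadj)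
    also have "cadj (rho ** B i ** B j) = B j ** B i ** rho"
      using rh Bh unfolding hermitian_def by (simp add: cadj_mult matrix_mul_assoc)
    also have "trace (B j ** B i ** rho) = trace (rho ** (B j ** B i))" by (rule trace_mul_sym)
    finally show ?thesis by (simp add: matrix_mul_assoc Zmat_def)
  qed
  thus ?thesis unfolding hermitian_def cadj_def by (simp add: vec_eq_iff)
qed

lemma herm_Im_antisym: "hermitian M \<Longrightarrow> transpose (Im_mat M) = - Im_mat M"
  unfolding hermitian_def cadj_def Im_mat_def transpose_def vec_eq_iff
  by (simp, metis cnj.sel(2) vec_lambda_beta)

lemma mat_decomp: "M = cmat (Re_mat M) + csmul \<i> (cmat (Im_mat M))"
  by (simp add: cmat_def Re_mat_def Im_mat_def csmul_def vec_eq_iff complex_eq_iff)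

lemma mabs_neg: "mabs (- X) = mabs X"
  unfolding mabs_def by (simp add: matrix_neg_mult transpose_def vec_eq_iff matrix_matrix_mult_def sum_negf)

lemma matrix_mult_neg_r: "A ** (- B) = - (A ** (B::'a::ring_1^'n^'n))"
  by (simp add: matrix_matrix_mult_def vec_eq_iff sum_negf)

lemma Re_mat_sandwich: "Re_mat (cmat g ** M ** cmat h) = g ** Re_mat M ** h"
  by (simp add: Re_mat_def cmat_def matrix_matrix_mult_def vec_eq_iff Re_sum sum_distrib_right)
lemma Im_mat_sandwich: "Im_mat (cmat g ** M ** cmat h) = g ** Im_mat M ** h"
  by (simp add: Im_mat_def cmat_def matrix_matrix_mult_def vec_eq_iff Im_sum sum_distrib_right)
lemma Re_trace_cmat: "Re (trace (cmat G ** M)) = trace (G ** Re_mat M)"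
  by (simp add: trace_def Re_mat_def cmat_def matrix_matrix_mult_def Re_sum)
lemma trace_sandwich: "g ** g = G \<Longrightarrow> trace (g ** X ** g) = trace (G ** (X::real^'d^'d))"
  by (metis trace_cyc3)

lemma cmat_herm: "transpose g = g \<Longrightarrow> hermitian (cmat g)"
  unfolding hermitian_def by (simp add: cmat_transpose)

lemma csmul_scale: "csmul (\<i> * of_real r) X = r *\<^sub>R csmul \<i> X"
  unfolding csmul_def vec_eq_iff vector_scaleR_component vec_lambda_beta by (simp add: scaleR_conv_of_real)

lemma transpose_uminus: "transpose (- X) = - transpose (X::'a::ring_1^'n^'n)"
  by (simp add: transpose_def vec_eq_iff)

lemma final_ineq:
  fixes G g :: "real^'d^'d" and W Z :: "complex^'d^'d"
  assumes g: "rpsd g" and gg: "g ** g = G" and Wh: "hermitian W" and Zh: "hermitian Z"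
    and b0: "0 \<le> \<beta>" and b1: "\<beta> \<le> 1"
    and CRi: "\<forall>x. Re (cinner x (W *v x)) \<le>
        Re (cinner x ((cmat (Re_mat Z) + csmul (\<i> * of_real \<beta>) (cmat (Im_mat Z))) *v x))"
  shows "Re (trace (cmat G ** W)) + trace (mabs (g ** Im_mat W ** g))
         \<le> Re (trace (cmat G ** Z)) + trace (mabs (g ** Im_mat Z ** g))"
proof -
  have gt: "transpose g = g" using g unfolding rpsd_def by blast
  define cg where "cg = cmat g"
  have cgh: "hermitian cg" unfolding cg_def using cmat_herm[OF gt] .
  define A where "A = g ** Im_mat Z ** g"
  have Aa: "transpose A = - A" unfolding A_def
    by (simp add: matrix_transpose_mul gt herm_Im_antisym[OF Zh] matrix_neg_mult matrix_mult_neg_r matrix_mul_assoc)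
  define Q where "Q = cg ** W ** cg"
  have Qh: "hermitian Q" using Wh cgh unfolding Q_def hermitian_def by (simp add: cadj_mult matrix_mul_assoc)
  define Mg where "Mg = cmat (Re_mat Z) + csmul (\<i> * of_real \<beta>) (cmat (Im_mat Z))"
  define V where "V = g ** Re_mat Z ** g + mabs A"
  have gMg: "cg ** Mg ** cg = cmat (g ** Re_mat Z ** g) + \<beta> *\<^sub>R csmul \<i> (cmat A)"
    unfolding Mg_def cg_def A_def
    by (simp add: matrix_add_ldistrib mm_add_r mm_csmul_l mm_csmul_r cmat_mult csmul_scale mm_scaleR_l mm_scaleR_r)
  have dec: "cmat V - Q = cg ** (Mg - W) ** cg + (cmat (mabs A) - \<beta> *\<^sub>R csmul \<i> (cmat A))"
    unfolding V_def Q_def by (simp add: mm_diff_l mm_diff_r gMg cmat_add algebra_simps)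
  have P: "0 \<le> Re (cinner x ((cmat V - Q) *v x))" for x
  proof -
    define y where "y = cg *v x"
    have "cinner x ((cg ** (Mg - W) ** cg) *v x) = cinner y ((Mg - W) *v y)"
      unfolding y_def by (simp add: matrix_vector_mul_assoc[symmetric] herm_cinner[OF cgh])
    also have "Re \<dots> = Re (cinner y (Mg *v y)) - Re (cinner y (W *v y))"
      by (simp add: matrix_vector_mult_diff_rdistrib cinner_diff_right)
    finally have 1: "0 \<le> Re (cinner x ((cg ** (Mg - W) ** cg) *v x))"
      using CRi unfolding Mg_def by (metis diff_ge_0_iff_ge)
    have 2: "0 \<le> Re (cinner x ((cmat (mabs A) - \<beta> *\<^sub>R csmul \<i> (cmat A)) *v x))"
      by (rule mabs_dom[OF Aa b0 b1])
    show ?thesis unfolding dec using 1 2 by (simp add: matrix_vector_mult_add_rdistrib cinner_add_right)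
  qed
  have Qa: "transpose (- Im_mat Q) = - (- Im_mat Q)" using herm_Im_antisym[OF Qh] by (simp add: transpose_uminus)
  have "\<forall>x. 0 \<le> Re (cinner x ((cmat (V - Re_mat Q) + csmul \<i> (cmat (- Im_mat Q))) *v x))"
  proof
    fix x
    have "cmat (V - Re_mat Q) + csmul \<i> (cmat (- Im_mat Q)) = cmat V - (cmat (Re_mat Q) + csmul \<i> (cmat (Im_mat Q)))"
      by (simp add: cmat_diff cmat_uminus csmul_def cmat_def vec_eq_iff)
    also have "\<dots> = cmat V - Q" using mat_decomp[of Q] by simp
    finally show "0 \<le> Re (cinner x ((cmat (V - Re_mat Q) + csmul \<i> (cmat (- Im_mat Q))) *v x))"
      using P by simp
  qed
  hence tl: "trace (mabs (- Im_mat Q)) \<le> trace (V - Re_mat Q)" by (rule mabs_trace_le[OF Qa])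
  have ImQ: "Im_mat Q = g ** Im_mat W ** g" unfolding Q_def cg_def by (rule Im_mat_sandwich)
  have ReQ: "Re_mat Q = g ** Re_mat W ** g" unfolding Q_def cg_def by (rule Re_mat_sandwich)
  have "Re (trace (cmat G ** W)) + trace (mabs (g ** Im_mat W ** g))
        = trace (Re_mat Q) + trace (mabs (- Im_mat Q))"
    unfolding ImQ ReQ mabs_neg Re_trace_cmat trace_sandwich[OF gg] ..
  also have "\<dots> \<le> trace V" using tl by (simp add: trace_sub)
  also have "trace V = Re (trace (cmat G ** Z)) + trace (mabs (g ** Im_mat Z ** g))"
    unfolding V_def A_def by (simp add: trace_add Re_trace_cmat trace_sandwich[OF gg])
  finally show ?thesis .
qed


theorem lemma5:
  fixes rho :: "real^'d \<Rightarrow> complex^'n^'n"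
    and \<Theta> :: "(real^'d) set"
    and \<theta>0 :: "real^'d"
    and Drho :: "real^'d \<Rightarrow> complex^'n^'n"
    and G :: "real^'d^'d"
    and \<beta> :: real
  assumes "open \<Theta>" and "\<theta>0 \<in> \<Theta>"
    and "\<forall>\<theta>\<in>\<Theta>. density (rho \<theta>)"
    and "rho differentiable_on \<Theta>"
    and "(rho has_derivative Drho) (at \<theta>0)"
    and "cpd (rho \<theta>0)"
    and "\<forall>c::real^'d. (\<Sum>i\<in>UNIV. c $ i *\<^sub>R SLD (rho \<theta>0) (pderiv_rho Drho i)) = 0 \<longrightarrow> c = 0"
    and "has_invariant_extension (rho \<theta>0) (pderiv_rho Drho)"
    and "rpd G"
    and "0 \<le> \<beta>" and "\<beta> \<le> 1"
  shows "Holevo (rho \<theta>0) (pderiv_rho Drho) G \<ge> Cbeta \<beta> (rho \<theta>0) (pderiv_rho Drho) G"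
proof -
  have rho: "cpd (rho \<theta>0)" by fact
  have rh: "hermitian (rho \<theta>0)" using rho unfolding cpd_def by blast
  have Dh: "\<forall>i. hermitian (pderiv_rho Drho i)"
    unfolding pderiv_rho_def using herm_deriv[OF assms(1,2,3,5)] by blast
  obtain B0 where B0: "locally_unbiased (pderiv_rho Drho) B0"
    using unbiased_exists[OF rho Dh assms(7)] by blast
  have Gp: "rpsd G" using assms(9) unfolding rpd_def rpsd_def
    by (metis inner_zero_left less_eq_real_def order_refl)
  define g where "g = msqrt G"
  have g: "rpsd g" "g ** g = G" unfolding g_def using msqrt[OF Gp] by auto
  define W where "W = matrix_inv (Jbeta \<beta> (rho \<theta>0) (pderiv_rho Drho))"
  have Wh: "hermitian W" unfolding W_def by (rule CR(2)[OF rho assms(10,11) Dh B0])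
  have Cb: "Cbeta \<beta> (rho \<theta>0) (pderiv_rho Drho) G =
      Re (trace (cmat G ** W)) + trace (mabs (g ** Im_mat W ** g))"
    unfolding Cbeta_def W_def g_def Let_def ..
  define f where "f B = Re (trace (cmat G ** Zmat (rho \<theta>0) B)) +
      trace (mabs (msqrt G ** Im_mat (Zmat (rho \<theta>0) B) ** msqrt G))" for B
  have H: "Holevo (rho \<theta>0) (pderiv_rho Drho) G = Inf (f ` {B. locally_unbiased (pderiv_rho Drho) B})"
    unfolding Holevo_def f_def ..
  show ?thesis
    unfolding H Cb
  proof (rule cInf_greatest)
    show "f ` {B. locally_unbiased (pderiv_rho Drho) B} \<noteq> {}" using B0 by blast
  next
    fix v assume "v \<in> f ` {B. locally_unbiased (pderiv_rho Drho) B}"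
    then obtain B where B: "locally_unbiased (pderiv_rho Drho) B" and v: "v = f B" by blast
    have Bh: "\<forall>j. hermitian (B j)" using B unfolding locally_unbiased_def by blast
    show "Re (trace (cmat G ** W)) + trace (mabs (g ** Im_mat W ** g)) \<le> v"
      unfolding v f_def g_def[symmetric]
      by (rule final_ineq[OF g Wh Zmat_herm[OF rh Bh] assms(10,11)])
         (use CR(3)[OF rho assms(10,11) Dh B] in \<open>simp add: W_def\<close>)
  qed
qed


end
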